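(* Let $A$ be a Hopf algebra with bijective antipode $S$, and let $\triangleright_1$ and $\triangleright_2$ be two actions of $A$ on an algebra $R$, each making $R$ a left $A$-module algebra. Suppose they are cocycle equivalent: there is a linear map $\gamma:A\to M(R)$ with $\gamma(1)=1$ such that for all $a,a'\in A$ and $x\in R$, (i) $\gamma(aa')=\sum\gamma(a_{(1)})\big(a_{(2)}\triangleright_1\gamma(a')\big)$, and (ii) $\sum(a_{(1)}\triangleright_2 x)\gamma(a_{(2)})=\sum\gamma(a_{(1)})(a_{(2)}\triangleright_1 x)$. Then the smash products $R\#_1 A$ and $R\#_2 A$ (built from $\triangleright_1$ and $\triangleright_2$ respectively) are isomorphic algebras.
   Context: $R$ is an algebra over $\mathbb C$, possibly without identity, with non-degenerate product; $M(R)$ its multiplier algebra. A left $A$-module algebra structure $\triangleright$ on $R$ means $R$ is a left $A$-module with $1\triangleright x=x$ and $a\triangleright(xx')=\sum(a_{(1)}\triangleright x)(a_{(2)}\triangleright x')$. The action $\triangleright_1$ is extended to $M(R)$ by letting $a\triangleright_1 m\in M(R)$ be the multiplier with $(a\triangleright_1 m)x=\sum a_{(1)}\triangleright_1(m(S(a_{(2)})\triangleright_1 x))$ and $x(a\triangleright_1 m)=\sum a_{(2)}\triangleright_1((S^{-1}(a_{(1)})\triangleright_1 x)m)$. The smash product $R\#_i A$ is $R\otimes A$ with product $(x\#_i a)(x'\#_i a')=\sum x(a_{(1)}\triangleright_i x')\#_i a_{(2)}a'$. *)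

theory Defs
  imports Complex_Main
begin

text \<open>
Complex vector spaces are carrier types equipped with an explicit scalar
multiplication satisfying the library locale vector_space.  The Hopf algebra A is a type
'a of class ring_1 with scalar multiplication sA; the algebra R (possibly without unit)
is a type 'r of class ring with scalar multiplication sR.

Tensor products: an element of a tensor product U (x) V of complex vector spaces is modelled
faithfully (injectively) by the functional it induces on bilinear forms U x V -> C; a finite
list of pairs [(u_i, v_i)] represents the tensor sum_i u_i (x) v_i.  The coproduct is given by
a function Delta returning such a list (a representative of Delta a); Sweedler sums are sums
over this list.  All equalities of tensors are stated through the induced functionals.
\<close>

definition bilin_form :: "(complex \<Rightarrow> 'u::ab_group_add \<Rightarrow> 'u) \<Rightarrow> (complex \<Rightarrow> 'v::ab_group_add \<Rightarrow> 'v)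
    \<Rightarrow> ('u \<Rightarrow> 'v \<Rightarrow> complex) \<Rightarrow> bool" where
  "bilin_form sU sV \<phi> \<longleftrightarrow>
     (\<forall>v. Vector_Spaces.linear sU (*) (\<lambda>u. \<phi> u v)) \<and> (\<forall>u. Vector_Spaces.linear sV (*) (\<phi> u))"

definition trilin_form :: "(complex \<Rightarrow> 'u::ab_group_add \<Rightarrow> 'u) \<Rightarrow> ('u \<Rightarrow> 'u \<Rightarrow> 'u \<Rightarrow> complex) \<Rightarrow> bool" where
  "trilin_form sU \<phi> \<longleftrightarrow>
     (\<forall>v w. Vector_Spaces.linear sU (*) (\<lambda>u. \<phi> u v w)) \<and>
     (\<forall>u w. Vector_Spaces.linear sU (*) (\<lambda>v. \<phi> u v w)) \<and>
     (\<forall>u v. Vector_Spaces.linear sU (*) (\<lambda>w. \<phi> u v w))"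

definition tens :: "(complex \<Rightarrow> 'u::ab_group_add \<Rightarrow> 'u) \<Rightarrow> (complex \<Rightarrow> 'v::ab_group_add \<Rightarrow> 'v) \<Rightarrow> ('u \<times> 'v) list
    \<Rightarrow> (('u \<Rightarrow> 'v \<Rightarrow> complex) \<Rightarrow> complex)" where
  "tens sU sV xs = (\<lambda>\<phi>. if bilin_form sU sV \<phi> then (\<Sum>(u, v)\<leftarrow>xs. \<phi> u v) else 0)"

definition tensor_space :: "(complex \<Rightarrow> 'u::ab_group_add \<Rightarrow> 'u) \<Rightarrow> (complex \<Rightarrow> 'v::ab_group_add \<Rightarrow> 'v)
    \<Rightarrow> (('u \<Rightarrow> 'v \<Rightarrow> complex) \<Rightarrow> complex) set" where
  "tensor_space sU sV = range (tens sU sV)"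

definition tadd :: "(('u \<Rightarrow> 'v \<Rightarrow> complex) \<Rightarrow> complex) \<Rightarrow> (('u \<Rightarrow> 'v \<Rightarrow> complex) \<Rightarrow> complex)
    \<Rightarrow> (('u \<Rightarrow> 'v \<Rightarrow> complex) \<Rightarrow> complex)" where
  "tadd t t' = (\<lambda>\<phi>. t \<phi> + t' \<phi>)"

definition tscale :: "complex \<Rightarrow> (('u \<Rightarrow> 'v \<Rightarrow> complex) \<Rightarrow> complex)
    \<Rightarrow> (('u \<Rightarrow> 'v \<Rightarrow> complex) \<Rightarrow> complex)" where
  "tscale c t = (\<lambda>\<phi>. c * t \<phi>)"

definition trep :: "(complex \<Rightarrow> 'u::ab_group_add \<Rightarrow> 'u) \<Rightarrow> (complex \<Rightarrow> 'v::ab_group_add \<Rightarrow> 'v)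
    \<Rightarrow> (('u \<Rightarrow> 'v \<Rightarrow> complex) \<Rightarrow> complex) \<Rightarrow> ('u \<times> 'v) list" where
  "trep sU sV t = (SOME xs. tens sU sV xs = t)"

definition cplx_algebra :: "(complex \<Rightarrow> 'a::ring \<Rightarrow> 'a) \<Rightarrow> bool" where
  "cplx_algebra s \<longleftrightarrow> vector_space s \<and>
     (\<forall>c a b. s c (a * b) = s c a * b \<and> s c (a * b) = a * s c b)"

definition nondegenerate :: "'r::ring itself \<Rightarrow> bool" where
  "nondegenerate _ \<longleftrightarrow> (\<forall>x::'r. (\<forall>y. x * y = 0) \<longrightarrow> x = 0) \<and> (\<forall>x::'r. (\<forall>y. y * x = 0) \<longrightarrow> x = 0)"

definition hopf_algebra :: "(complex \<Rightarrow> 'a::ring_1 \<Rightarrow> 'a) \<Rightarrow> ('a \<Rightarrow> ('a \<times> 'a) list)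
    \<Rightarrow> ('a \<Rightarrow> complex) \<Rightarrow> ('a \<Rightarrow> 'a) \<Rightarrow> bool" where
  "hopf_algebra sA \<Delta> \<epsilon> S \<longleftrightarrow>
     cplx_algebra sA \<and>
     \<comment> \<open>Delta linear\<close>
     (\<forall>a b. tens sA sA (\<Delta> (a + b)) = tens sA sA (\<Delta> a @ \<Delta> b)) \<and>
     (\<forall>c a. tens sA sA (\<Delta> (sA c a)) = tens sA sA (map (\<lambda>(u, v). (sA c u, v)) (\<Delta> a))) \<and>
     \<comment> \<open>coassociativity\<close>
     (\<forall>a \<phi>. trilin_form sA \<phi> \<longrightarrow>
        (\<Sum>(u, v)\<leftarrow>\<Delta> a. \<Sum>(u1, u2)\<leftarrow>\<Delta> u. \<phi> u1 u2 v) =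
        (\<Sum>(u, v)\<leftarrow>\<Delta> a. \<Sum>(v1, v2)\<leftarrow>\<Delta> v. \<phi> u v1 v2)) \<and>
     \<comment> \<open>Delta algebra map\<close>
     (\<forall>a b. tens sA sA (\<Delta> (a * b)) =
        tens sA sA [(u * u', v * v'). (u, v) \<leftarrow> \<Delta> a, (u', v') \<leftarrow> \<Delta> b]) \<and>
     tens sA sA (\<Delta> 1) = tens sA sA [(1, 1)] \<and>
     \<comment> \<open>counit\<close>
     Vector_Spaces.linear sA (*) \<epsilon> \<and>
     (\<forall>a b. \<epsilon> (a * b) = \<epsilon> a * \<epsilon> b) \<and> \<epsilon> 1 = 1 \<and>
     (\<forall>a. (\<Sum>(u, v)\<leftarrow>\<Delta> a. sA (\<epsilon> u) v) = a) \<and>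
     (\<forall>a. (\<Sum>(u, v)\<leftarrow>\<Delta> a. sA (\<epsilon> v) u) = a) \<and>
     \<comment> \<open>antipode\<close>
     Vector_Spaces.linear sA sA S \<and>
     (\<forall>a. (\<Sum>(u, v)\<leftarrow>\<Delta> a. S u * v) = sA (\<epsilon> a) 1) \<and>
     (\<forall>a. (\<Sum>(u, v)\<leftarrow>\<Delta> a. u * S v) = sA (\<epsilon> a) 1)"

definition module_algebra :: "(complex \<Rightarrow> 'a::ring_1 \<Rightarrow> 'a) \<Rightarrow> ('a \<Rightarrow> ('a \<times> 'a) list)
    \<Rightarrow> (complex \<Rightarrow> 'r::ring \<Rightarrow> 'r) \<Rightarrow> ('a \<Rightarrow> 'r \<Rightarrow> 'r) \<Rightarrow> bool" where
  "module_algebra sA \<Delta> sR act \<longleftrightarrow>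
     (\<forall>x. Vector_Spaces.linear sA sR (\<lambda>a. act a x)) \<and>
     (\<forall>a. Vector_Spaces.linear sR sR (act a)) \<and>
     (\<forall>a b x. act (a * b) x = act a (act b x)) \<and>
     (\<forall>x. act 1 x = x) \<and>
     (\<forall>a x x'. act a (x * x') = (\<Sum>(u, v)\<leftarrow>\<Delta> a. act u x * act v x'))"

text \<open>Multipliers of R: pairs (L, Rm) (m x = L x, x m = Rm x) with (x m) y = x (m y).\<close>
type_synonym 'r mult = "('r \<Rightarrow> 'r) \<times> ('r \<Rightarrow> 'r)"

definition is_multiplier :: "'r::ring mult \<Rightarrow> bool" where
  "is_multiplier m \<longleftrightarrow> (\<forall>x y. snd m x * y = x * fst m y)"

definition mmult :: "'r mult \<Rightarrow> 'r mult \<Rightarrow> 'r mult" where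
  "mmult m n = (fst m \<circ> fst n, snd n \<circ> snd m)"

definition mone :: "'r mult" where
  "mone = (id, id)"

definition madd :: "'r::ring mult \<Rightarrow> 'r mult \<Rightarrow> 'r mult" where
  "madd m n = ((\<lambda>x. fst m x + fst n x), (\<lambda>x. snd m x + snd n x))"

definition mscale :: "(complex \<Rightarrow> 'r \<Rightarrow> 'r) \<Rightarrow> complex \<Rightarrow> 'r mult \<Rightarrow> 'r mult" where
  "mscale sR c m = ((\<lambda>x. sR c (fst m x)), (\<lambda>x. sR c (snd m x)))"

definition msum :: "'r::ring mult list \<Rightarrow> 'r mult" where
  "msum ms = foldr madd ms ((\<lambda>_. 0), (\<lambda>_. 0))"

definition act_mult :: "('a \<Rightarrow> ('a \<times> 'a) list) \<Rightarrow> ('a \<Rightarrow> 'a) \<Rightarrow> ('a \<Rightarrow> 'r::ring \<Rightarrow> 'r)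
    \<Rightarrow> 'a \<Rightarrow> 'r mult \<Rightarrow> 'r mult" where
  "act_mult \<Delta> S act a m =
     ((\<lambda>x. \<Sum>(u, v)\<leftarrow>\<Delta> a. act u (fst m (act (S v) x))),
      (\<lambda>x. \<Sum>(u, v)\<leftarrow>\<Delta> a. act v (snd m (act (inv S u) x))))"

definition cocycle_equivalent :: "(complex \<Rightarrow> 'a::ring_1 \<Rightarrow> 'a) \<Rightarrow> ('a \<Rightarrow> ('a \<times> 'a) list)
    \<Rightarrow> ('a \<Rightarrow> 'a) \<Rightarrow> (complex \<Rightarrow> 'r::ring \<Rightarrow> 'r) \<Rightarrow> ('a \<Rightarrow> 'r \<Rightarrow> 'r) \<Rightarrow> ('a \<Rightarrow> 'r \<Rightarrow> 'r)
    \<Rightarrow> ('a \<Rightarrow> 'r mult) \<Rightarrow> bool" where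
  "cocycle_equivalent sA \<Delta> S sR act1 act2 \<gamma> \<longleftrightarrow>
     (\<forall>a. is_multiplier (\<gamma> a)) \<and>
     (\<forall>a b. \<gamma> (a + b) = madd (\<gamma> a) (\<gamma> b)) \<and>
     (\<forall>c a. \<gamma> (sA c a) = mscale sR c (\<gamma> a)) \<and>
     \<gamma> 1 = mone \<and>
     (\<forall>a a'. \<gamma> (a * a') = msum [mmult (\<gamma> u) (act_mult \<Delta> S act1 v (\<gamma> a')). (u, v) \<leftarrow> \<Delta> a]) \<and>
     (\<forall>a x. (\<Sum>(u, v)\<leftarrow>\<Delta> a. snd (\<gamma> v) (act2 u x)) =
            (\<Sum>(u, v)\<leftarrow>\<Delta> a. fst (\<gamma> u) (act1 v x)))"

definition smash_mult :: "(complex \<Rightarrow> 'r::ring \<Rightarrow> 'r) \<Rightarrow> (complex \<Rightarrow> 'a::ring_1 \<Rightarrow> 'a)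
    \<Rightarrow> ('a \<Rightarrow> ('a \<times> 'a) list) \<Rightarrow> ('a \<Rightarrow> 'r \<Rightarrow> 'r)
    \<Rightarrow> (('r \<Rightarrow> 'a \<Rightarrow> complex) \<Rightarrow> complex) \<Rightarrow> (('r \<Rightarrow> 'a \<Rightarrow> complex) \<Rightarrow> complex)
    \<Rightarrow> (('r \<Rightarrow> 'a \<Rightarrow> complex) \<Rightarrow> complex)" where
  "smash_mult sR sA \<Delta> act t t' =
     tens sR sA [(x * act u x', v * a'). (x, a) \<leftarrow> trep sR sA t, (x', a') \<leftarrow> trep sR sA t', (u, v) \<leftarrow> \<Delta> a]"

definition smash_isomorphic :: "(complex \<Rightarrow> 'r::ring \<Rightarrow> 'r) \<Rightarrow> (complex \<Rightarrow> 'a::ring_1 \<Rightarrow> 'a)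
    \<Rightarrow> ('a \<Rightarrow> ('a \<times> 'a) list) \<Rightarrow> ('a \<Rightarrow> 'r \<Rightarrow> 'r) \<Rightarrow> ('a \<Rightarrow> 'r \<Rightarrow> 'r) \<Rightarrow> bool" where
  "smash_isomorphic sR sA \<Delta> act1 act2 \<longleftrightarrow>
     (\<exists>\<Phi>. bij_betw \<Phi> (tensor_space sR sA) (tensor_space sR sA) \<and>
        (\<forall>t\<in>tensor_space sR sA. \<forall>t'\<in>tensor_space sR sA.
           \<Phi> (tadd t t') = tadd (\<Phi> t) (\<Phi> t') \<and>
           \<Phi> (smash_mult sR sA \<Delta> act1 t t') = smash_mult sR sA \<Delta> act2 (\<Phi> t) (\<Phi> t')) \<and>
        (\<forall>c. \<forall>t\<in>tensor_space sR sA. \<Phi> (tscale c t) = tscale c (\<Phi> t)))"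

end

theory Submission imports Defs begin

definition lin :: "(complex \<Rightarrow> 'u::ab_group_add \<Rightarrow> 'u) \<Rightarrow> (complex \<Rightarrow> 'v::ab_group_add \<Rightarrow> 'v) \<Rightarrow> ('u \<Rightarrow> 'v) \<Rightarrow> bool" where
  "lin s t f \<longleftrightarrow> (\<forall>x y. f (x + y) = f x + f y) \<and> (\<forall>c x. f (s c x) = t c (f x))"

lemma linD: "lin s t f \<Longrightarrow> f (x + y) = f x + f y" "lin s t f \<Longrightarrow> f (s c x) = t c (f x)"
  by (auto simp: lin_def)

lemma lin_zero: "lin s t f \<Longrightarrow> f 0 = 0"
  by (metis add_cancel_right_right add_0 linD(1))

lemma lin_diff: "lin s t f \<Longrightarrow> f (x - y) = f x - f y"
  by (metis diff_add_cancel eq_diff_eq linD(1))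

lemma lin_sum_list: "lin s t f \<Longrightarrow> f (sum_list (map g xs)) = sum_list (map (\<lambda>x. f (g x)) xs)"
  by (induction xs) (auto simp: lin_zero linD)

lemma lin_sum_list2: "lin s t f \<Longrightarrow> f (\<Sum>(u, v)\<leftarrow>xs. g u v) = (\<Sum>(u, v)\<leftarrow>xs. f (g u v))"
  by (induction xs) (auto simp: lin_zero linD)

lemma vs_module: "vector_space t \<Longrightarrow> module t" by (simp add: module_iff_vector_space)

lemma vs_scale_sum_list: "vector_space t \<Longrightarrow> t c (sum_list (map g xs)) = sum_list (map (\<lambda>x. t c (g x)) xs)"
  by (induction xs) (auto simp: module.scale_right_distrib[OF vs_module] module.scale_zero_right[OF vs_module])

lemma vs_scale_sum_list2: "vector_space t \<Longrightarrow> t c (\<Sum>(u, v)\<leftarrow>xs. g u v) = (\<Sum>(u, v)\<leftarrow>xs. t c (g u v))"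
  by (induction xs) (auto simp: module.scale_right_distrib[OF vs_module] module.scale_zero_right[OF vs_module])

lemma sum_fst_snd: "(\<Sum>x\<leftarrow>xs. f (fst x) (snd x)) = (\<Sum>(u, v)\<leftarrow>xs. f u v)"
  by (induction xs) auto

lemma vs_complex: "vector_space ((*) :: complex \<Rightarrow> complex \<Rightarrow> complex)"
  by (unfold_locales) (auto simp: algebra_simps)

lemma lin_linear: "vector_space s \<Longrightarrow> vector_space t \<Longrightarrow> lin s t f \<Longrightarrow> Vector_Spaces.linear s t f"
  by (simp add: Vector_Spaces.linear_iff lin_def)

lemma functional_exists:
  assumes vs: "vector_space s" and w: "w \<noteq> 0"
  shows "\<exists>l. Vector_Spaces.linear s ((*) :: complex \<Rightarrow> complex \<Rightarrow> complex) l \<and> l w = 1"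
proof -
  interpret vp: vector_space_pair s "(*) :: complex \<Rightarrow> complex \<Rightarrow> complex"
    by (intro vector_space_pair.intro vs vs_complex)
  have "vp.vs1.independent {w}"
    using w by (simp add: vp.vs1.independent_insert)
  from vp.linear_independent_extend[OF this, of "\<lambda>_. 1"] show ?thesis by auto
qed

lemma sum_list_cong2: "(\<And>x. x \<in> set xs \<Longrightarrow> f x = g x) \<Longrightarrow> sum_list (map f xs) = sum_list (map g xs)"
  by (metis map_cong)

lemma tens_transfer:
  assumes eq: "tens sU sV xs = tens sU sV ys"
    and vU: "vector_space sU" and vV: "vector_space sV" and vW: "vector_space sW"
    and l1: "\<And>v. lin sU sW (\<lambda>u. \<beta> u v)" and l2: "\<And>u. lin sV sW (\<beta> u)"
  shows "(\<Sum>(u, v)\<leftarrow>xs. \<beta> u v) = (\<Sum>(u, v)\<leftarrow>ys. \<beta> u v)"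
proof (rule ccontr)
  assume ne: "\<not> ?thesis"
  obtain l where l: "Vector_Spaces.linear sW ((*) :: complex \<Rightarrow> complex \<Rightarrow> complex) l"
    and l1': "l ((\<Sum>(u, v)\<leftarrow>xs. \<beta> u v) - (\<Sum>(u, v)\<leftarrow>ys. \<beta> u v)) = 1"
    using functional_exists[OF vW, of "(\<Sum>(u, v)\<leftarrow>xs. \<beta> u v) - (\<Sum>(u, v)\<leftarrow>ys. \<beta> u v)"] ne by auto
  have ll: "lin sW (*) l" using l by (simp add: Vector_Spaces.linear_iff lin_def)
  have bf: "bilin_form sU sV (\<lambda>u v. l (\<beta> u v))"
    unfolding bilin_form_def
  proof (intro conjI allI)
    fix v show "Vector_Spaces.linear sU (*) (\<lambda>u. l (\<beta> u v))"
      using l1[of v] ll vU vs_complex by (simp add: Vector_Spaces.linear_iff lin_def)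
  next
    fix u show "Vector_Spaces.linear sV (*) (\<lambda>v. l (\<beta> u v))"
      using l2[of u] ll vV vs_complex by (simp add: Vector_Spaces.linear_iff lin_def)
  qed
  have "tens sU sV xs (\<lambda>u v. l (\<beta> u v)) = tens sU sV ys (\<lambda>u v. l (\<beta> u v))" using eq by simp
  then have "(\<Sum>(u, v)\<leftarrow>xs. l (\<beta> u v)) = (\<Sum>(u, v)\<leftarrow>ys. l (\<beta> u v))"
    using bf by (simp add: tens_def)
  moreover have "l (\<Sum>(u, v)\<leftarrow>xs. \<beta> u v) = (\<Sum>(u, v)\<leftarrow>xs. l (\<beta> u v))"
    using lin_sum_list2[OF ll] by blast
  moreover have "l (\<Sum>(u, v)\<leftarrow>ys. \<beta> u v) = (\<Sum>(u, v)\<leftarrow>ys. l (\<beta> u v))"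
    using lin_sum_list2[OF ll] by blast
  moreover have "l ((\<Sum>(u, v)\<leftarrow>xs. \<beta> u v) - (\<Sum>(u, v)\<leftarrow>ys. \<beta> u v)) = l (\<Sum>(u, v)\<leftarrow>xs. \<beta> u v) - l (\<Sum>(u, v)\<leftarrow>ys. \<beta> u v)"
    using ll by (rule lin_diff)
  ultimately show False using l1' by simp
qed


lemma tens_transfer3:
  assumes coa: "\<And>\<phi>. trilin_form sU \<phi> \<Longrightarrow> P (\<lambda>x y z. \<phi> x y z) = Q (\<lambda>x y z. \<phi> x y z)"
    and Plin: "\<And>l H. lin sW (*) l \<Longrightarrow> P (\<lambda>x y z. l (H x y z)) = l (P H)"
    and Qlin: "\<And>l H. lin sW (*) l \<Longrightarrow> Q (\<lambda>x y z. l (H x y z)) = l (Q H)"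
    and vU: "vector_space sU" and vW: "vector_space sW"
    and l1: "\<And>y z. lin sU sW (\<lambda>x. H x y z)" and l2: "\<And>x z. lin sU sW (\<lambda>y. H x y z)"
    and l3: "\<And>x y. lin sU sW (\<lambda>z. H x y z)"
  shows "P H = Q H"
proof (rule ccontr)
  assume ne: "\<not> ?thesis"
  obtain l where l: "Vector_Spaces.linear sW ((*) :: complex \<Rightarrow> complex \<Rightarrow> complex) l"
    and l1': "l (P H - Q H) = 1"
    using functional_exists[OF vW, of "P H - Q H"] ne by auto
  have ll: "lin sW (*) l" using l by (simp add: Vector_Spaces.linear_iff lin_def)
  have tf: "trilin_form sU (\<lambda>x y z. l (H x y z))"
    unfolding trilin_form_def using l1 l2 l3 ll vU vs_complex
    by (simp add: Vector_Spaces.linear_iff lin_def)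
  have "P (\<lambda>x y z. l (H x y z)) = Q (\<lambda>x y z. l (H x y z))" using coa[OF tf] by simp
  then have "l (P H) = l (Q H)" using Plin[OF ll] Qlin[OF ll] by simp
  then show False using l1' lin_diff[OF ll] by simp
qed

lemma lin_sum_list_fun:
  assumes "vector_space t" "\<And>y. y \<in> set ys \<Longrightarrow> lin s t (\<lambda>x. f x y)"
  shows "lin s t (\<lambda>x. \<Sum>y\<leftarrow>ys. f x y)"
  using assms(2)
proof (induction ys)
  case Nil then show ?case by (simp add: lin_def module.scale_zero_right[OF vs_module[OF assms(1)]])
next
  case (Cons a ys)
  then show ?case
    by (auto simp: lin_def module.scale_right_distrib[OF vs_module[OF assms(1)]] algebra_simps)
qed

lemma lin_sum_list_fun2:
  assumes "vector_space t" "\<And>u v. (u, v) \<in> set ys \<Longrightarrow> lin s t (\<lambda>x. f x u v)"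
  shows "lin s t (\<lambda>x. \<Sum>(u, v)\<leftarrow>ys. f x u v)"
  using assms(2)
proof (induction ys)
  case Nil then show ?case by (simp add: lin_def module.scale_zero_right[OF vs_module[OF assms(1)]])
next
  case (Cons a ys)
  then show ?case
    by (cases a) (auto simp: lin_def module.scale_right_distrib[OF vs_module[OF assms(1)]] algebra_simps)
qed

lemma sum_map_fst_scale: "(\<Sum>(u, v)\<leftarrow>map (\<lambda>(u, v). (g u, v)) xs. \<beta> u v) = (\<Sum>(u, v)\<leftarrow>xs. \<beta> (g u) v)"
  by (induction xs) auto

lemma sum_map_fst_scale': "sum_list (map ((\<lambda>(x, y). \<phi> x y) \<circ> (\<lambda>(u, y). (g u, y))) xs) = (\<Sum>(u, v)\<leftarrow>xs. \<phi> (g u) v)"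
  by (induction xs) auto

lemma sum_comprehension: "(\<Sum>(x, y)\<leftarrow>[(f u u', g v v'). (u, v)\<leftarrow>xs, (u', v')\<leftarrow>ys]. \<beta> x y) =
   (\<Sum>(u, v)\<leftarrow>xs. \<Sum>(u', v')\<leftarrow>ys. \<beta> (f u u') (g v v') :: 'v::comm_monoid_add)"
proof (induction xs)
  case Nil then show ?case by simp
next
  case (Cons a xs)
  have "(\<Sum>(x, y)\<leftarrow>[(f (fst a) u', g (snd a) v'). (u', v')\<leftarrow>ys]. \<beta> x y) = (\<Sum>(u', v')\<leftarrow>ys. \<beta> (f (fst a) u') (g (snd a) v'))"
    by (induction ys) auto
  with Cons show ?case by (cases a) simp
qed

primrec SW :: "('a \<Rightarrow> ('a \<times> 'a) list) \<Rightarrow> nat \<Rightarrow> 'a \<Rightarrow> ('a list \<Rightarrow> 'v::ab_group_add) \<Rightarrow> 'v" where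
  "SW D 0 a F = F [a]"
| "SW D (Suc n) a F = (\<Sum>(u, v)\<leftarrow>D a. SW D n v (\<lambda>vs. F (u # vs)))"

lemma sum_list_add2: "(\<Sum>(u, v)\<leftarrow>xs. f u v + g u v) = ((\<Sum>(u, v)\<leftarrow>xs. f u v) + (\<Sum>(u, v)\<leftarrow>xs. g u v) :: 'v::comm_monoid_add)"
  by (induction xs) (auto simp: add_ac)

lemma sum_list_zero2: "(\<Sum>(u, v)\<leftarrow>xs. 0) = (0::'v::comm_monoid_add)"
  by (induction xs) auto

lemma sum_list_swap2: "(\<Sum>(u, v)\<leftarrow>xs. \<Sum>(p, q)\<leftarrow>ys. f u v p q) = (\<Sum>(p, q)\<leftarrow>ys. \<Sum>(u, v)\<leftarrow>xs. f u v p q :: 'v::comm_monoid_add)"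
  by (induction xs) (auto simp: sum_list_add2 sum_list_zero2)

lemma SW_add: "SW D n a (\<lambda>t. F t + G t) = SW D n a F + SW D n a G"
  by (induction n arbitrary: a F G) (auto simp: sum_list_add2)

lemma SW_zero: "SW D n a (\<lambda>t. 0) = 0"
  by (induction n arbitrary: a) (auto simp: sum_list_zero2)

lemma SW_sum_list: "SW D n a (\<lambda>t. \<Sum>y\<leftarrow>ys. G y t) = (\<Sum>y\<leftarrow>ys. SW D n a (G y))"
  by (induction ys) (auto simp: SW_add SW_zero)

lemma SW_sum_list2: "SW D n a (\<lambda>t. \<Sum>(p, q)\<leftarrow>ys. G p q t) = (\<Sum>(p, q)\<leftarrow>ys. SW D n a (G p q))"
  by (induction ys) (auto simp: SW_add SW_zero)

lemma SW_cong: "(\<And>t. length t = Suc n \<Longrightarrow> F t = G t) \<Longrightarrow> SW D n a F = SW D n a G"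
proof (induction n arbitrary: a F G)
  case 0 then show ?case by simp
next
  case (Suc n)
  show ?case
    by (simp, rule sum_list_cong2, auto intro!: Suc.IH Suc.prems)
qed

lemma SW_lin_param:
  assumes vW: "vector_space sW" and h: "\<And>t. length t = Suc n \<Longrightarrow> lin s sW (\<lambda>x. G x t)"
  shows "lin s sW (\<lambda>x. SW D n a (G x))"
  using h
proof (induction n arbitrary: a G)
  case 0 then show ?case by simp
next
  case (Suc n)
  show ?case
    by (simp, rule lin_sum_list_fun2[OF vW], rule Suc.IH, rule Suc.prems, simp)
qed

definition mlin :: "(complex \<Rightarrow> 'a::ab_group_add \<Rightarrow> 'a) \<Rightarrow> (complex \<Rightarrow> 'v::ab_group_add \<Rightarrow> 'v) \<Rightarrow> nat \<Rightarrow> ('a list \<Rightarrow> 'v) \<Rightarrow> bool" where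
  "mlin sA' sW n F \<longleftrightarrow> (\<forall>i<Suc n. \<forall>t. length t = Suc n \<longrightarrow> lin sA' sW (\<lambda>x. F (t[i := x])))"

lemma mlin_Cons:
  fixes F :: "'a::ab_group_add list \<Rightarrow> 'v::ab_group_add"
  shows "mlin s sW (Suc n) F \<Longrightarrow> mlin s sW n (\<lambda>vs. F (u # vs))"
  unfolding mlin_def
proof (intro allI impI)
  fix i and t :: "'a list" assume m: "\<forall>i<Suc (Suc n). \<forall>t. length t = Suc (Suc n) \<longrightarrow> lin s sW (\<lambda>x. F (t[i := x]))"
    and i: "i < Suc n" and t: "length t = Suc n"
  have "lin s sW (\<lambda>x. F ((u # t)[Suc i := x]))" using m[rule_format, of "Suc i" "u # t"] i t by simp
  then show "lin s sW (\<lambda>x. F (u # t[i := x]))" by simp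
qed

lemma mlin_Cons0: "mlin s sW (Suc n) F \<Longrightarrow> length vs = Suc n \<Longrightarrow> lin s sW (\<lambda>x. F (x # vs))"
  unfolding mlin_def
proof -
  assume m: "\<forall>i<Suc (Suc n). \<forall>t. length t = Suc (Suc n) \<longrightarrow> lin s sW (\<lambda>x. F (t[i := x]))"
    and l: "length vs = Suc n"
  have "lin s sW (\<lambda>x. F ((undefined # vs)[0 := x]))" using m[rule_format, of 0 "undefined # vs"] l by simp
  then show ?thesis by simp
qed

lemma mlin_0: "mlin s sW 0 F \<Longrightarrow> lin s sW (\<lambda>x. F [x])"
  unfolding mlin_def
proof -
  assume m: "\<forall>i<Suc 0. \<forall>t. length t = Suc 0 \<longrightarrow> lin s sW (\<lambda>x. F (t[i := x]))"
  have "lin s sW (\<lambda>x. F ([undefined][0 := x]))" using m[rule_format, of 0 "[undefined]"] by simp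
  then show ?thesis by simp
qed

lemma mlin1I:
  assumes "\<And>b. lin s sW (\<lambda>x. F [x,b])" and "\<And>a. lin s sW (\<lambda>x. F [a,x])"
  shows "mlin s sW 1 F"
proof -
  { fix i and t' :: "'a list" assume i: "i < Suc 1" and l: "length t' = Suc 1"
    then obtain a b where tt: "t' = [a,b]" by (auto simp: length_Suc_conv numeral_eq_Suc)
    from i have "i = 0 \<or> i = 1" by auto
    then have "lin s sW (\<lambda>x. F (t'[i := x]))" using assms tt by (auto simp: numeral_eq_Suc) }
  then show ?thesis unfolding mlin_def by blast
qed

lemma mlin2I:
  assumes "\<And>b c. lin s sW (\<lambda>x. F [x,b,c])" and "\<And>a c. lin s sW (\<lambda>x. F [a,x,c])" and "\<And>a b. lin s sW (\<lambda>x. F [a,b,x])"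
  shows "mlin s sW 2 F"
proof -
  { fix i and t' :: "'a list" assume i: "i < Suc 2" and l: "length t' = Suc 2"
    then obtain a b c where tt: "t' = [a,b,c]" by (auto simp: length_Suc_conv numeral_eq_Suc)
    from i have "i = 0 \<or> i = 1 \<or> i = 2" by auto
    then have "lin s sW (\<lambda>x. F (t'[i := x]))" using assms tt by (auto simp: numeral_eq_Suc) }
  then show ?thesis unfolding mlin_def by blast
qed

lemma mlin3I:
  assumes "\<And>b c d. lin s sW (\<lambda>x. F [x,b,c,d])" and "\<And>a c d. lin s sW (\<lambda>x. F [a,x,c,d])" and "\<And>a b d. lin s sW (\<lambda>x. F [a,b,x,d])" and "\<And>a b c. lin s sW (\<lambda>x. F [a,b,c,x])"
  shows "mlin s sW 3 F"
proof -
  { fix i and t' :: "'a list" assume i: "i < Suc 3" and l: "length t' = Suc 3"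
    then obtain a b c d where tt: "t' = [a,b,c,d]" by (auto simp: length_Suc_conv numeral_eq_Suc)
    from i have "i = 0 \<or> i = 1 \<or> i = 2 \<or> i = 3" by auto
    then have "lin s sW (\<lambda>x. F (t'[i := x]))" using assms tt by (auto simp: numeral_eq_Suc) }
  then show ?thesis unfolding mlin_def by blast
qed

lemma mlin4I:
  assumes "\<And>b c d e. lin s sW (\<lambda>x. F [x,b,c,d,e])" and "\<And>a c d e. lin s sW (\<lambda>x. F [a,x,c,d,e])" and "\<And>a b d e. lin s sW (\<lambda>x. F [a,b,x,d,e])" and "\<And>a b c e. lin s sW (\<lambda>x. F [a,b,c,x,e])" and "\<And>a b c d. lin s sW (\<lambda>x. F [a,b,c,d,x])"
  shows "mlin s sW 4 F"
proof -
  { fix i and t' :: "'a list" assume i: "i < Suc 4" and l: "length t' = Suc 4"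
    then obtain a b c d e where tt: "t' = [a,b,c,d,e]" by (auto simp: length_Suc_conv numeral_eq_Suc)
    from i have "i = 0 \<or> i = 1 \<or> i = 2 \<or> i = 3 \<or> i = 4" by auto
    then have "lin s sW (\<lambda>x. F (t'[i := x]))" using assms tt by (auto simp: numeral_eq_Suc) }
  then show ?thesis unfolding mlin_def by blast
qed

lemma mlin5I:
  assumes "\<And>b c d e f. lin s sW (\<lambda>x. F [x,b,c,d,e,f])" and "\<And>a c d e f. lin s sW (\<lambda>x. F [a,x,c,d,e,f])" and "\<And>a b d e f. lin s sW (\<lambda>x. F [a,b,x,d,e,f])" and "\<And>a b c e f. lin s sW (\<lambda>x. F [a,b,c,x,e,f])" and "\<And>a b c d f. lin s sW (\<lambda>x. F [a,b,c,d,x,f])" and "\<And>a b c d e. lin s sW (\<lambda>x. F [a,b,c,d,e,x])"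
  shows "mlin s sW 5 F"
proof -
  { fix i and t' :: "'a list" assume i: "i < Suc 5" and l: "length t' = Suc 5"
    then obtain a b c d e f where tt: "t' = [a,b,c,d,e,f]" by (auto simp: length_Suc_conv numeral_eq_Suc)
    from i have "i = 0 \<or> i = 1 \<or> i = 2 \<or> i = 3 \<or> i = 4 \<or> i = 5" by auto
    then have "lin s sW (\<lambda>x. F (t'[i := x]))" using assms tt by (auto simp: numeral_eq_Suc) }
  then show ?thesis unfolding mlin_def by blast
qed

lemma mlin6I:
  assumes "\<And>b c d e f g. lin s sW (\<lambda>x. F [x,b,c,d,e,f,g])" and "\<And>a c d e f g. lin s sW (\<lambda>x. F [a,x,c,d,e,f,g])" and "\<And>a b d e f g. lin s sW (\<lambda>x. F [a,b,x,d,e,f,g])" and "\<And>a b c e f g. lin s sW (\<lambda>x. F [a,b,c,x,e,f,g])" and "\<And>a b c d f g. lin s sW (\<lambda>x. F [a,b,c,d,x,f,g])" and "\<And>a b c d e g. lin s sW (\<lambda>x. F [a,b,c,d,e,x,g])" and "\<And>a b c d e f. lin s sW (\<lambda>x. F [a,b,c,d,e,f,x])"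
  shows "mlin s sW 6 F"
proof -
  { fix i and t' :: "'a list" assume i: "i < Suc 6" and l: "length t' = Suc 6"
    then obtain a b c d e f g where tt: "t' = [a,b,c,d,e,f,g]" by (auto simp: length_Suc_conv numeral_eq_Suc)
    from i have "i = 0 \<or> i = 1 \<or> i = 2 \<or> i = 3 \<or> i = 4 \<or> i = 5 \<or> i = 6" by auto
    then have "lin s sW (\<lambda>x. F (t'[i := x]))" using assms tt by (auto simp: numeral_eq_Suc) }
  then show ?thesis unfolding mlin_def by blast
qed

lemma sum_gen1: "(\<Sum>(y, b)\<leftarrow>[(f u v, g u v). (u, v)\<leftarrow>ys]. \<phi> y b) = (\<Sum>(u, v)\<leftarrow>ys. \<phi> (f u v) (g u v) :: 'c::comm_monoid_add)"
  by (induction ys) auto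
lemma sum_gen1': "sum_list (map ((\<lambda>(x, y). \<phi> x y) \<circ> (\<lambda>(u, v). (f u v, g u v))) ys) = (\<Sum>(u, v)\<leftarrow>ys. \<phi> (f u v) (g u v) :: 'c::comm_monoid_add)"
  by (induction ys) auto
lemma sum_gen2: "(\<Sum>(y, b)\<leftarrow>[(f x a u v, g x a u v). (x, a)\<leftarrow>xs, (u, v)\<leftarrow>h x a]. \<phi> y b) = (\<Sum>(x, a)\<leftarrow>xs. \<Sum>(u, v)\<leftarrow>h x a. \<phi> (f x a u v) (g x a u v) :: 'c::comm_monoid_add)"
proof (induction xs)
  case Nil then show ?case by simp
next
  case (Cons p xs) then show ?case by (cases p) (simp add: sum_gen1')
qed
lemma sum_gen3: "(\<Sum>(y, b)\<leftarrow>[(f x a x' a' u v, g x a x' a' u v). (x, a)\<leftarrow>xs, (x', a')\<leftarrow>ys, (u, v)\<leftarrow>h a]. \<phi> y b)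
   = (\<Sum>(x, a)\<leftarrow>xs. \<Sum>(x', a')\<leftarrow>ys. \<Sum>(u, v)\<leftarrow>h a. \<phi> (f x a x' a' u v) (g x a x' a' u v) :: 'c::comm_monoid_add)"
proof (induction xs)
  case Nil then show ?case by simp
next
  case (Cons p xs) then show ?case by (cases p) (simp add: sum_gen2)
qed

locale ctx =
  fixes sA :: "complex \<Rightarrow> 'a::ring_1 \<Rightarrow> 'a"
    and \<Delta> :: "'a \<Rightarrow> ('a \<times> 'a) list"
    and \<epsilon> :: "'a \<Rightarrow> complex"
    and S :: "'a \<Rightarrow> 'a"
    and sR :: "complex \<Rightarrow> 'r::ring \<Rightarrow> 'r"
    and act1 act2 :: "'a \<Rightarrow> 'r \<Rightarrow> 'r"
    and \<gamma> :: "'a \<Rightarrow> 'r mult"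
  assumes hopf: "hopf_algebra sA \<Delta> \<epsilon> S"
    and bijS: "bij S"
    and algR: "cplx_algebra sR"
    and nd: "nondegenerate TYPE('r)"
    and ma1: "module_algebra sA \<Delta> sR act1"
    and ma2: "module_algebra sA \<Delta> sR act2"
    and coc: "cocycle_equivalent sA \<Delta> S sR act1 act2 \<gamma>"
begin

lemma vsA: "vector_space sA" using hopf by (simp add: hopf_algebra_def cplx_algebra_def)
lemma vsR: "vector_space sR" using algR by (simp add: cplx_algebra_def)
lemma sA_mult: "sA c (a * b) = sA c a * b" "sA c (a * b) = a * sA c b"
  using hopf unfolding hopf_algebra_def cplx_algebra_def by blast+
lemma sR_mult: "sR c (x * y) = sR c x * y" "sR c (x * y) = x * sR c y"
  using algR unfolding cplx_algebra_def by blast+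
lemma D_add: "tens sA sA (\<Delta> (a + b)) = tens sA sA (\<Delta> a @ \<Delta> b)"
  using hopf by (simp add: hopf_algebra_def)
lemma D_scale: "tens sA sA (\<Delta> (sA c a)) = tens sA sA (map (\<lambda>(u, v). (sA c u, v)) (\<Delta> a))"
  using hopf by (simp add: hopf_algebra_def)
lemma D_coassoc: "trilin_form sA \<phi> \<Longrightarrow>
        (\<Sum>(u, v)\<leftarrow>\<Delta> a. \<Sum>(u1, u2)\<leftarrow>\<Delta> u. \<phi> u1 u2 v) =
        (\<Sum>(u, v)\<leftarrow>\<Delta> a. \<Sum>(v1, v2)\<leftarrow>\<Delta> v. \<phi> u v1 v2)"
  using hopf by (simp add: hopf_algebra_def)
lemma D_mult: "tens sA sA (\<Delta> (a * b)) = tens sA sA [(u * u', v * v'). (u, v) \<leftarrow> \<Delta> a, (u', v') \<leftarrow> \<Delta> b]"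
  using hopf by (simp add: hopf_algebra_def)
lemma D_one: "tens sA sA (\<Delta> 1) = tens sA sA [(1, 1)]"
  using hopf by (simp add: hopf_algebra_def)
lemma eps_lin: "lin sA (*) \<epsilon>"
  using hopf by (simp add: hopf_algebra_def Vector_Spaces.linear_iff lin_def)
lemma eps_mult: "\<epsilon> (a * b) = \<epsilon> a * \<epsilon> b" and eps_one: "\<epsilon> 1 = 1"
  using hopf by (auto simp: hopf_algebra_def)
lemma counit_l: "(\<Sum>(u, v)\<leftarrow>\<Delta> a. sA (\<epsilon> u) v) = a"
  and counit_r: "(\<Sum>(u, v)\<leftarrow>\<Delta> a. sA (\<epsilon> v) u) = a"
  using hopf by (auto simp: hopf_algebra_def)
lemma S_lin: "lin sA sA S"
  using hopf by (simp add: hopf_algebra_def Vector_Spaces.linear_iff lin_def)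
lemma antipode_l: "(\<Sum>(u, v)\<leftarrow>\<Delta> a. S u * v) = sA (\<epsilon> a) 1"
  and antipode_r: "(\<Sum>(u, v)\<leftarrow>\<Delta> a. u * S v) = sA (\<epsilon> a) 1"
  using hopf by (auto simp: hopf_algebra_def)

definition bil :: "(complex \<Rightarrow> 'v::ab_group_add \<Rightarrow> 'v) \<Rightarrow> ('a \<Rightarrow> 'a \<Rightarrow> 'v) \<Rightarrow> bool" where
  "bil sW \<beta> \<longleftrightarrow> (\<forall>v. lin sA sW (\<lambda>u. \<beta> u v)) \<and> (\<forall>u. lin sA sW (\<beta> u))"

lemma bilI: "(\<And>v. lin sA sW (\<lambda>u. \<beta> u v)) \<Longrightarrow> (\<And>u. lin sA sW (\<beta> u)) \<Longrightarrow> bil sW \<beta>"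
  by (simp add: bil_def)

lemma D_transfer:
  assumes "tens sA sA xs = tens sA sA ys" "vector_space sW" "bil sW \<beta>"
  shows "(\<Sum>(u, v)\<leftarrow>xs. \<beta> u v) = (\<Sum>(u, v)\<leftarrow>ys. \<beta> u v)"
  using tens_transfer[OF assms(1) vsA vsA assms(2)] assms(3) by (auto simp: bil_def)

lemma D_lin:
  assumes vW: "vector_space sW" and b: "bil sW \<beta>"
  shows "lin sA sW (\<lambda>a. \<Sum>(u, v)\<leftarrow>\<Delta> a. \<beta> u v)"
  unfolding lin_def
proof (intro conjI allI)
  fix x y
  show "(\<Sum>(u, v)\<leftarrow>\<Delta> (x + y). \<beta> u v) = (\<Sum>(u, v)\<leftarrow>\<Delta> x. \<beta> u v) + (\<Sum>(u, v)\<leftarrow>\<Delta> y. \<beta> u v)"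
    using D_transfer[OF D_add vW b] by simp
next
  fix c x
  have "(\<Sum>(u, v)\<leftarrow>\<Delta> (sA c x). \<beta> u v) = (\<Sum>(u, v)\<leftarrow>map (\<lambda>(u, v). (sA c u, v)) (\<Delta> x). \<beta> u v)"
    using D_transfer[OF D_scale vW b] by simp
  also have "\<dots> = (\<Sum>(u, v)\<leftarrow>\<Delta> x. \<beta> (sA c u) v)"
    by (rule sum_map_fst_scale)
  also have "\<dots> = (\<Sum>(u, v)\<leftarrow>\<Delta> x. sW c (\<beta> u v))"
    using b by (simp add: bil_def lin_def)
  also have "\<dots> = sW c (\<Sum>(u, v)\<leftarrow>\<Delta> x. \<beta> u v)"
    by (rule vs_scale_sum_list2[OF vW, symmetric])
  finally show "(\<Sum>(u, v)\<leftarrow>\<Delta> (sA c x). \<beta> u v) = sW c (\<Sum>(u, v)\<leftarrow>\<Delta> x. \<beta> u v)" .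
qed

lemma D_mult_sum:
  assumes vW: "vector_space sW" and b: "bil sW \<beta>"
  shows "(\<Sum>(u, v)\<leftarrow>\<Delta> (a * b). \<beta> u v) = (\<Sum>(u, v)\<leftarrow>\<Delta> a. \<Sum>(u', v')\<leftarrow>\<Delta> b. \<beta> (u * u') (v * v'))"
proof -
  have "(\<Sum>(u, v)\<leftarrow>\<Delta> (a * b). \<beta> u v) = (\<Sum>(u, v)\<leftarrow>[(u * u', v * v'). (u, v) \<leftarrow> \<Delta> a, (u', v') \<leftarrow> \<Delta> b]. \<beta> u v)"
    using D_transfer[OF D_mult vW b] by simp
  also have "\<dots> = (\<Sum>(u, v)\<leftarrow>\<Delta> a. \<Sum>(u', v')\<leftarrow>\<Delta> b. \<beta> (u * u') (v * v'))"
    by (rule sum_comprehension)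
  finally show ?thesis .
qed

lemma D_one_sum:
  assumes vW: "vector_space sW" and b: "bil sW \<beta>"
  shows "(\<Sum>(u, v)\<leftarrow>\<Delta> 1. \<beta> u v) = \<beta> 1 1"
  using D_transfer[OF D_one vW b] by simp

lemma D_coassoc_V:
  assumes vW: "vector_space sW"
    and l1: "\<And>y z. lin sA sW (\<lambda>x. H x y z)" and l2: "\<And>x z. lin sA sW (\<lambda>y. H x y z)"
    and l3: "\<And>x y. lin sA sW (\<lambda>z. H x y z)"
  shows "(\<Sum>(u, v)\<leftarrow>\<Delta> a. \<Sum>(u1, u2)\<leftarrow>\<Delta> u. H u1 u2 v) = (\<Sum>(u, v)\<leftarrow>\<Delta> a. \<Sum>(v1, v2)\<leftarrow>\<Delta> v. H u v1 v2)"
    (is "?P = ?Q")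
proof (rule ccontr)
  assume ne: "\<not> ?thesis"
  obtain l where l: "Vector_Spaces.linear sW ((*) :: complex \<Rightarrow> complex \<Rightarrow> complex) l"
    and l1': "l (?P - ?Q) = 1"
    using functional_exists[OF vW, of "?P - ?Q"] ne by auto
  have ll: "lin sW (*) l" using l by (simp add: Vector_Spaces.linear_iff lin_def)
  have tf: "trilin_form sA (\<lambda>x y z. l (H x y z))"
    unfolding trilin_form_def using l1 l2 l3 ll vsA vs_complex
    by (simp add: Vector_Spaces.linear_iff lin_def)
  have "l ?P = (\<Sum>(u, v)\<leftarrow>\<Delta> a. \<Sum>(u1, u2)\<leftarrow>\<Delta> u. l (H u1 u2 v))"
    by (simp add: lin_sum_list2[OF ll])
  also have "\<dots> = (\<Sum>(u, v)\<leftarrow>\<Delta> a. \<Sum>(v1, v2)\<leftarrow>\<Delta> v. l (H u v1 v2))"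
    using D_coassoc[OF tf] by simp
  also have "\<dots> = l ?Q"
    by (simp add: lin_sum_list2[OF ll])
  finally show False using l1' lin_diff[OF ll] by simp
qed

lemma SW_lin:
  assumes vW: "vector_space sW"
  shows "mlin sA sW n F \<Longrightarrow> lin sA sW (\<lambda>a. SW \<Delta> n a F)"
proof (induction n arbitrary: F)
  case 0 then show ?case by (simp add: mlin_0)
next
  case (Suc n)
  show ?case
    apply simp
    apply (rule D_lin[OF vW])
    apply (rule bilI)
     apply (rule SW_lin_param[OF vW])
     apply (erule mlin_Cons0[OF Suc.prems])
    apply (rule Suc.IH)
    apply (rule mlin_Cons[OF Suc.prems])
    done
qed

lemma SW_expand:
  assumes vW: "vector_space sW"
  shows "mlin sA sW (Suc n) F \<Longrightarrow> k \<le> n \<Longrightarrow>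
    SW \<Delta> n a (\<lambda>t. \<Sum>(p, q)\<leftarrow>\<Delta> (t ! k). F (take k t @ p # q # drop (Suc k) t)) = SW \<Delta> (Suc n) a F"
proof (induction n arbitrary: a k F)
  case 0 then show ?case by simp
next
  case (Suc m)
  show ?case
  proof (cases k)
    case 0
    have m1: "mlin sA sW (Suc m) (\<lambda>vs. F (x # vs))" for x using mlin_Cons[OF Suc.prems(1)] .
    have m2: "mlin sA sW m (\<lambda>vs. F (x # y # vs))" for x y using mlin_Cons[OF m1] .
    have "SW \<Delta> (Suc m) a (\<lambda>t. \<Sum>(p, q)\<leftarrow>\<Delta> (t ! k). F (take k t @ p # q # drop (Suc k) t))
        = (\<Sum>(u, v)\<leftarrow>\<Delta> a. \<Sum>(p, q)\<leftarrow>\<Delta> u. SW \<Delta> m v (\<lambda>vs. F (p # q # vs)))"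
      using 0 by (simp add: SW_sum_list2)
    also have "\<dots> = (\<Sum>(u, v)\<leftarrow>\<Delta> a. \<Sum>(v1, v2)\<leftarrow>\<Delta> v. SW \<Delta> m v2 (\<lambda>vs. F (u # v1 # vs)))"
    proof (rule D_coassoc_V[OF vW, where H="\<lambda>x y z. SW \<Delta> m z (\<lambda>vs. F (x # y # vs))"])
      fix y z show "lin sA sW (\<lambda>x. SW \<Delta> m z (\<lambda>vs. F (x # y # vs)))"
        by (rule SW_lin_param[OF vW], rule mlin_Cons0[OF Suc.prems(1)], simp)
    next
      fix x z show "lin sA sW (\<lambda>y. SW \<Delta> m z (\<lambda>vs. F (x # y # vs)))"
        by (rule SW_lin_param[OF vW], rule mlin_Cons0[OF m1], simp)
    next
      fix x y show "lin sA sW (\<lambda>z. SW \<Delta> m z (\<lambda>vs. F (x # y # vs)))"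
        by (rule SW_lin[OF vW m2])
    qed
    also have "\<dots> = SW \<Delta> (Suc (Suc m)) a F" by simp
    finally show ?thesis .
  next
    case (Suc k')
    have k': "k' \<le> m" using Suc Suc.prems by simp
    have "SW \<Delta> (Suc m) a (\<lambda>t. \<Sum>(p, q)\<leftarrow>\<Delta> (t ! k). F (take k t @ p # q # drop (Suc k) t))
      = (\<Sum>(u, v)\<leftarrow>\<Delta> a. SW \<Delta> m v (\<lambda>vs. \<Sum>(p, q)\<leftarrow>\<Delta> (vs ! k'). F (u # take k' vs @ p # q # drop (Suc k') vs)))"
      using Suc by simp
    also have "\<dots> = (\<Sum>(u, v)\<leftarrow>\<Delta> a. SW \<Delta> (Suc m) v (\<lambda>vs. F (u # vs)))"
    proof -
      have "SW \<Delta> m v (\<lambda>vs. \<Sum>(p, q)\<leftarrow>\<Delta> (vs ! k'). F (u # take k' vs @ p # q # drop (Suc k') vs))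
         = SW \<Delta> (Suc m) v (\<lambda>vs. F (u # vs))" for u v
        using Suc.IH[OF mlin_Cons[OF Suc.prems(1)] k', of v] by simp
      then show ?thesis by simp
    qed
    also have "\<dots> = SW \<Delta> (Suc (Suc m)) a F" by simp
    finally show ?thesis .
  qed
qed


lemma SW_expand':
  assumes vW: "vector_space sW" and mn: "m = Suc n" and m: "mlin sA sW m F" and k: "k \<le> n"
    and G: "\<And>t. length t = Suc n \<Longrightarrow> G t = (\<Sum>(p, q)\<leftarrow>\<Delta> (t ! k). F (take k t @ p # q # drop (Suc k) t))"
  shows "SW \<Delta> n a G = SW \<Delta> m a F"
proof -
  have m': "mlin sA sW (Suc n) F" using m mn by simp
  show ?thesis unfolding mn
    using SW_cong[of n G "\<lambda>t. \<Sum>(p, q)\<leftarrow>\<Delta> (t ! k). F (take k t @ p # q # drop (Suc k) t)"] G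
    SW_expand[OF vW m' k] by simp
qed

lemma sA_mult': "sA c a * b = sA c (a * b)" "a * sA c b = sA c (a * b)"
  using sA_mult by simp_all
lemma sR_mult': "sR c x * y = sR c (x * y)" "x * sR c y = sR c (x * y)"
  using sR_mult by simp_all

lemma lin_id: "lin s s (\<lambda>x. x)" by (simp add: lin_def)
lemma lin_add: "vector_space t \<Longrightarrow> lin s t f \<Longrightarrow> lin s t g \<Longrightarrow> lin s t (\<lambda>x. f x + g x)"
  by (simp add: lin_def module.scale_right_distrib[OF vs_module] add_ac)
lemma lin_multA_l: "lin s sA g \<Longrightarrow> lin s sA (\<lambda>x. g x * y)"
  by (simp add: lin_def distrib_right sA_mult')
lemma lin_multA_r: "lin s sA g \<Longrightarrow> lin s sA (\<lambda>x. y * g x)"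
  by (simp add: lin_def distrib_left sA_mult')
lemma lin_multR_l: "lin s sR g \<Longrightarrow> lin s sR (\<lambda>x. g x * y)"
  by (simp add: lin_def distrib_right sR_mult')
lemma lin_multR_r: "lin s sR g \<Longrightarrow> lin s sR (\<lambda>x. y * g x)"
  by (simp add: lin_def distrib_left sR_mult')
lemma lin_S: "lin s sA g \<Longrightarrow> lin s sA (\<lambda>x. S (g x))"
  using S_lin by (simp add: lin_def)
lemma lin_eps: "lin s sA g \<Longrightarrow> lin s (*) (\<lambda>x. \<epsilon> (g x))"
  using eps_lin by (simp add: lin_def)
lemma lin_scale_l: "vector_space sW \<Longrightarrow> lin s (*) g \<Longrightarrow> lin s sW (\<lambda>x. sW (g x) y)"
  by (simp add: lin_def module.scale_left_distrib[OF vs_module] module.scale_scale[OF vs_module])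
lemma lin_scale_r: "vector_space sW \<Longrightarrow> lin s sW g \<Longrightarrow> lin s sW (\<lambda>x. sW c (g x))"
  by (simp add: lin_def module.scale_right_distrib[OF vs_module] module.scale_left_commute[OF vs_module])

lemmas linA_rules = lin_id lin_multA_l lin_multA_r lin_S lin_eps lin_scale_l[OF vsA] lin_scale_r[OF vsA]

lemma lin_bil1: "bil sW \<beta> \<Longrightarrow> lin s sA g \<Longrightarrow> lin s sW (\<lambda>x. \<beta> (g x) y)"
  by (simp add: bil_def lin_def)
lemma lin_bil2: "bil sW \<beta> \<Longrightarrow> lin s sA g \<Longrightarrow> lin s sW (\<lambda>x. \<beta> y (g x))"
  by (simp add: bil_def lin_def)
lemma lin_Dsum: "vector_space sW \<Longrightarrow> bil sW \<beta> \<Longrightarrow> lin s sA g \<Longrightarrow> lin s sW (\<lambda>x. \<Sum>(u, v)\<leftarrow>\<Delta> (g x). \<beta> u v)"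
  using D_lin[of sW \<beta>] by (simp add: lin_def)
lemma lin_sum2: "vector_space t \<Longrightarrow> (\<And>u v. lin s t (\<lambda>x. f x u v)) \<Longrightarrow> lin s t (\<lambda>x. \<Sum>(u, v)\<leftarrow>ys. f x u v)"
  by (rule lin_sum_list_fun2) auto

lemma CU_r: "vector_space sW \<Longrightarrow> lin sA sW f \<Longrightarrow> (\<Sum>(u, v)\<leftarrow>\<Delta> a. sW (\<epsilon> v) (f u)) = f a"
  using lin_sum_list2[of sA sW f "\<lambda>u v. sA (\<epsilon> v) u" "\<Delta> a"] counit_r[of a] by (simp add: lin_def)
lemma CU_l: "vector_space sW \<Longrightarrow> lin sA sW f \<Longrightarrow> (\<Sum>(u, v)\<leftarrow>\<Delta> a. sW (\<epsilon> u) (f v)) = f a"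
  using lin_sum_list2[of sA sW f "\<lambda>u v. sA (\<epsilon> u) v" "\<Delta> a"] counit_l[of a] by (simp add: lin_def)
lemma AP_r: "lin sA sW f \<Longrightarrow> (\<Sum>(u, v)\<leftarrow>\<Delta> a. f (u * S v)) = sW (\<epsilon> a) (f 1)"
  using lin_sum_list2[of sA sW f "\<lambda>u v. u * S v" "\<Delta> a"] antipode_r[of a] by (simp add: lin_def)
lemma AP_l: "lin sA sW f \<Longrightarrow> (\<Sum>(u, v)\<leftarrow>\<Delta> a. f (S u * v)) = sW (\<epsilon> a) (f 1)"
  using lin_sum_list2[of sA sW f "\<lambda>u v. S u * v" "\<Delta> a"] antipode_l[of a] by (simp add: lin_def)

lemma scaleA_one: "sA 1 x = x" using vsA by (simp add: module.scale_one[OF vs_module])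

lemma S_one: "S 1 = 1"
proof -
  have "(\<Sum>(u, v)\<leftarrow>\<Delta> 1. S u * v) = S 1 * 1"
    by (rule D_one_sum[OF vsA], rule bilI, auto intro!: linA_rules)
  then show ?thesis using antipode_l[of 1] by (simp add: eps_one scaleA_one)
qed

lemma S_mult: "S (a * b) = S b * S a"
proof -
  define E where "E = SW \<Delta> 2 a (\<lambda>s. SW \<Delta> 2 b (\<lambda>t. S (s!0 * t!0) * (s!1 * t!1) * S (t!2) * S (s!2)))"
  have "E = S (a * b)"
  proof -
    have 1: "SW \<Delta> 2 b (\<lambda>t. S (s!0 * t!0) * (s!1 * t!1) * S (t!2) * S (s!2)) = S (s!0 * b) * s!1 * S (s!2)" for s
    proof -
      have "SW \<Delta> 2 b (\<lambda>t. S (s!0 * t!0) * (s!1 * t!1) * S (t!2) * S (s!2))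
          = (\<Sum>(u, v)\<leftarrow>\<Delta> b. \<Sum>(p, q)\<leftarrow>\<Delta> v. (S (s!0 * u) * s!1) * (p * S q) * S (s!2))"
        by (simp add: numeral_eq_Suc mult.assoc)
      also have "\<dots> = (\<Sum>(u, v)\<leftarrow>\<Delta> b. sA (\<epsilon> v) (S (s!0 * u) * s!1 * S (s!2)))"
        by (subst AP_r[where f="\<lambda>z. (S (s!0 * _) * s!1) * z * S (s!2)"], auto intro!: linA_rules)
      also have "\<dots> = S (s!0 * b) * s!1 * S (s!2)"
        by (rule CU_r[OF vsA, where f="\<lambda>z. S (s!0 * z) * s!1 * S (s!2)"], auto intro!: linA_rules)
      finally show ?thesis .
    qed
    have "E = SW \<Delta> 2 a (\<lambda>s. S (s!0 * b) * s!1 * S (s!2))"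
      unfolding E_def 1 ..
    also have "\<dots> = (\<Sum>(u, v)\<leftarrow>\<Delta> a. \<Sum>(p, q)\<leftarrow>\<Delta> v. S (u * b) * (p * S q))"
      by (simp add: numeral_eq_Suc mult.assoc)
    also have "\<dots> = (\<Sum>(u, v)\<leftarrow>\<Delta> a. sA (\<epsilon> v) (S (u * b)))"
      by (subst AP_r[where f="\<lambda>z. S (_ * b) * z"], auto intro!: linA_rules simp: mult.assoc)
    also have "\<dots> = S (a * b)"
      by (rule CU_r[OF vsA, where f="\<lambda>z. S (z * b)"], auto intro!: linA_rules)
    finally show ?thesis .
  qed
  moreover have "E = S b * S a"
  proof -
    define K where "K s t = S (s!0 * t!0) * (s!1 * t!1) * S (t!2) * S (s!2)" for s t :: "'a list"
    have K1: "SW \<Delta> 2 b (K s) = (\<Sum>(t0, t1)\<leftarrow>\<Delta> b. \<Sum>(p, q)\<leftarrow>\<Delta> t0. K s [p, q, t1])" for s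
    proof -
      have "SW \<Delta> 1 b (\<lambda>t. \<Sum>(p, q)\<leftarrow>\<Delta> (t!0). K s [p, q, t!1]) = SW \<Delta> 2 b (K s)"
      proof (rule SW_expand'[OF vsA])
        show "mlin sA sA 2 (K s)"
          by (rule mlin2I) (auto simp: K_def intro!: linA_rules)
      qed (auto simp: length_Suc_conv)
      then show ?thesis by (simp add: numeral_eq_Suc)
    qed
    have "E = SW \<Delta> 2 a (\<lambda>s. \<Sum>(t0, t1)\<leftarrow>\<Delta> b. \<Sum>(p, q)\<leftarrow>\<Delta> t0. K s [p, q, t1])"
      unfolding E_def K_def[symmetric] K1 ..
    also have "\<dots> = (\<Sum>(u, v)\<leftarrow>\<Delta> a. \<Sum>(p', q')\<leftarrow>\<Delta> u. \<Sum>(t0, t1)\<leftarrow>\<Delta> b. \<Sum>(p, q)\<leftarrow>\<Delta> t0. K [p', q', v] [p, q, t1])"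
    proof -
      have "SW \<Delta> 1 a (\<lambda>s. \<Sum>(p', q')\<leftarrow>\<Delta> (s!0). \<Sum>(t0, t1)\<leftarrow>\<Delta> b. \<Sum>(p, q)\<leftarrow>\<Delta> t0. K [p', q', s!1] [p, q, t1])
         = SW \<Delta> 2 a (\<lambda>s. \<Sum>(t0, t1)\<leftarrow>\<Delta> b. \<Sum>(p, q)\<leftarrow>\<Delta> t0. K s [p, q, t1])"
      proof (rule SW_expand'[OF vsA])
        show "mlin sA sA 2 (\<lambda>s. \<Sum>(t0, t1)\<leftarrow>\<Delta> b. \<Sum>(p, q)\<leftarrow>\<Delta> t0. K s [p, q, t1])"
          by (rule mlin2I) (auto simp: K_def intro!: linA_rules lin_sum2[OF vsA])
      qed (auto simp: length_Suc_conv)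
      then show ?thesis by (simp add: numeral_eq_Suc)
    qed
    also have "\<dots> = (\<Sum>(u, v)\<leftarrow>\<Delta> a. \<Sum>(t0, t1)\<leftarrow>\<Delta> b. \<Sum>(p', q')\<leftarrow>\<Delta> u. \<Sum>(p, q)\<leftarrow>\<Delta> t0. S (p' * p) * (q' * q) * (S t1 * S v))"
      unfolding K_def by (simp add: sum_list_swap2[where ys="\<Delta> b"] mult.assoc)
    also have "\<dots> = (\<Sum>(u, v)\<leftarrow>\<Delta> a. \<Sum>(t0, t1)\<leftarrow>\<Delta> b. \<Sum>(c1, c2)\<leftarrow>\<Delta> (u * t0). S c1 * c2 * (S t1 * S v))"
      by (subst D_mult_sum[OF vsA], rule bilI, auto intro!: linA_rules)
    also have "\<dots> = (\<Sum>(u, v)\<leftarrow>\<Delta> a. \<Sum>(t0, t1)\<leftarrow>\<Delta> b. sA (\<epsilon> u) (sA (\<epsilon> t0) (S t1 * S v)))"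
      by (subst AP_l[where f="\<lambda>z. z * (S _ * S _)"], auto intro!: linA_rules simp: eps_mult module.scale_scale[OF vs_module[OF vsA]] mult.commute)
    also have "\<dots> = (\<Sum>(u, v)\<leftarrow>\<Delta> a. sA (\<epsilon> u) (S b * S v))"
    proof -
      have "(\<Sum>(t0, t1)\<leftarrow>\<Delta> b. sA (\<epsilon> u) (sA (\<epsilon> t0) (S t1 * S v))) = sA (\<epsilon> u) (S b * S v)" for u v
        by (subst vs_scale_sum_list2[OF vsA, symmetric], subst CU_l[OF vsA, where f="\<lambda>z. S z * S v"], auto intro!: linA_rules)
      then show ?thesis by simp
    qed
    also have "\<dots> = S b * S a"
      by (rule CU_l[OF vsA, where f="\<lambda>z. S b * S z"], auto intro!: linA_rules)
    finally show ?thesis .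
  qed
  ultimately show ?thesis by simp
qed


lemma S_inj: "S x = S y \<Longrightarrow> x = y" using bijS by (meson bij_def injD)

definition T where "T = inv S"
lemma S_T: "S (T x) = x" using bijS by (simp add: T_def bij_is_surj surj_f_inv_f)
lemma T_S: "T (S x) = x" using bijS by (simp add: T_def bij_is_inj inv_f_f)

lemma T_lin: "lin sA sA T"
  unfolding lin_def
proof (intro conjI allI)
  fix x y show "T (x + y) = T x + T y"
    by (rule S_inj) (metis S_T S_lin linD(1))
next
  fix c x show "T (sA c x) = sA c (T x)"
    by (rule S_inj) (metis S_T S_lin linD(2))
qed

lemma lin_T: "lin s sA g \<Longrightarrow> lin s sA (\<lambda>x. T (g x))"
  using T_lin by (simp add: lin_def)

lemma TA: "(\<Sum>(u, v)\<leftarrow>\<Delta> b. v * T u) = sA (\<epsilon> b) 1"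
proof (rule S_inj)
  have "S (\<Sum>(u, v)\<leftarrow>\<Delta> b. v * T u) = (\<Sum>(u, v)\<leftarrow>\<Delta> b. S (v * T u))"
    by (rule lin_sum_list2[OF S_lin])
  also have "\<dots> = (\<Sum>(u, v)\<leftarrow>\<Delta> b. u * S v)" by (simp add: S_mult S_T)
  also have "\<dots> = S (sA (\<epsilon> b) 1)" using antipode_r S_lin S_one by (simp add: lin_def)
  finally show "S (\<Sum>(u, v)\<leftarrow>\<Delta> b. v * T u) = S (sA (\<epsilon> b) 1)" .
qed

lemma DS_Z:
  assumes vW: "vector_space sW" and b: "bil sW \<beta>"
  shows "SW \<Delta> 3 c (\<lambda>t. \<beta> (p * t!0 * S (t!3)) (q * t!1 * S (t!2))) = sW (\<epsilon> c) (\<beta> p q)"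
proof -
  have "SW \<Delta> 3 c (\<lambda>t. \<beta> (p * t!0 * S (t!3)) (q * t!1 * S (t!2)))
     = SW \<Delta> 2 c (\<lambda>t. \<Sum>(x, y)\<leftarrow>\<Delta> (t!1). \<beta> (p * t!0 * S (t!2)) (q * x * S y))"
  proof (rule SW_expand'[OF vW, where k=1, symmetric])
    show "mlin sA sW 3 (\<lambda>t. \<beta> (p * t!0 * S (t!3)) (q * t!1 * S (t!2)))"
      by (rule mlin3I) (auto intro!: linA_rules lin_bil1[OF b] lin_bil2[OF b])
  qed (auto simp: length_Suc_conv numeral_eq_Suc)
  also have "\<dots> = SW \<Delta> 2 c (\<lambda>t. sW (\<epsilon> (t!1)) (\<beta> (p * t!0 * S (t!2)) q))"
  proof (rule SW_cong)
    fix t :: "'a list"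
    have "(\<Sum>(x, y)\<leftarrow>\<Delta> (t!1). \<beta> (p * t!0 * S (t!2)) (q * (x * S y))) = sW (\<epsilon> (t!1)) (\<beta> (p * t!0 * S (t!2)) (q * 1))"
      by (rule AP_r, auto intro!: linA_rules lin_bil2[OF b])
    then show "(\<Sum>(x, y)\<leftarrow>\<Delta> (t!1). \<beta> (p * t!0 * S (t!2)) (q * x * S y)) = sW (\<epsilon> (t!1)) (\<beta> (p * t!0 * S (t!2)) q)"
      by (simp add: mult.assoc)
  qed
  also have "\<dots> = (\<Sum>(u, v)\<leftarrow>\<Delta> c. \<Sum>(x, y)\<leftarrow>\<Delta> v. sW (\<epsilon> x) (\<beta> (p * u * S y) q))"
    by (simp add: numeral_eq_Suc)
  also have "\<dots> = (\<Sum>(u, v)\<leftarrow>\<Delta> c. \<beta> (p * (u * S v)) q)"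
    by (subst CU_l[OF vW], auto intro!: linA_rules lin_bil1[OF b] simp: mult.assoc)
  also have "\<dots> = sW (\<epsilon> c) (\<beta> (p * 1) q)"
    by (rule AP_r, auto intro!: linA_rules lin_bil1[OF b])
  finally show ?thesis by simp
qed


lemma SW4_unfold: "SW \<Delta> 4 a F = (\<Sum>(u, v)\<leftarrow>\<Delta> a. SW \<Delta> 3 v (\<lambda>vs. F (u # vs)))"
  by (simp add: numeral_eq_Suc)

lemma DS:
  assumes vW: "vector_space sW" and b: "bil sW \<beta>"
  shows "(\<Sum>(p, q)\<leftarrow>\<Delta> (S a). \<beta> p q) = (\<Sum>(u, v)\<leftarrow>\<Delta> a. \<beta> (S v) (S u))"
proof -
  have "(\<Sum>(p, q)\<leftarrow>\<Delta> (S a). \<beta> p q) = (\<Sum>(a1, a')\<leftarrow>\<Delta> a. sW (\<epsilon> a') (\<Sum>(p, q)\<leftarrow>\<Delta> (S a1). \<beta> p q))"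
    by (rule CU_r[OF vW, symmetric], rule lin_Dsum[OF vW b], rule lin_S, rule lin_id)
  also have "\<dots> = (\<Sum>(a1, a')\<leftarrow>\<Delta> a. \<Sum>(p, q)\<leftarrow>\<Delta> (S a1). SW \<Delta> 3 a' (\<lambda>t. \<beta> (p * t!0 * S (t!3)) (q * t!1 * S (t!2))))"
    by (simp only: vs_scale_sum_list2[OF vW] DS_Z[OF vW b, symmetric])
  also have "\<dots> = SW \<Delta> 4 a (\<lambda>t. \<Sum>(p, q)\<leftarrow>\<Delta> (S (t!0)). \<beta> (p * t!1 * S (t!4)) (q * t!2 * S (t!3)))"
    unfolding SW4_unfold by (simp add: SW_sum_list2)
  also have "\<dots> = SW \<Delta> 3 a (\<lambda>t. \<Sum>(y1, y2)\<leftarrow>\<Delta> (t!1). \<Sum>(p, q)\<leftarrow>\<Delta> (S (t!0)). \<beta> (p * y1 * S (t!3)) (q * y2 * S (t!2)))"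
  proof (rule SW_expand'[OF vW, where k=1, symmetric])
    show "mlin sA sW 4 (\<lambda>t. \<Sum>(p, q)\<leftarrow>\<Delta> (S (t!0)). \<beta> (p * t!1 * S (t!4)) (q * t!2 * S (t!3)))"
      apply (rule mlin4I; simp)
      apply (rule lin_Dsum[OF vW], rule bilI, (intro linA_rules lin_bil1[OF b] lin_bil2[OF b])+)
      apply (intro lin_sum2[OF vW] linA_rules lin_bil1[OF b] lin_bil2[OF b])+
      done
  qed (auto simp: length_Suc_conv numeral_eq_Suc)
  also have "\<dots> = SW \<Delta> 3 a (\<lambda>t. \<Sum>(c1, c2)\<leftarrow>\<Delta> (S (t!0) * t!1). \<beta> (c1 * S (t!3)) (c2 * S (t!2)))"
  proof (rule SW_cong)
    fix t :: "'a list"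
    show "(\<Sum>(y1, y2)\<leftarrow>\<Delta> (t!1). \<Sum>(p, q)\<leftarrow>\<Delta> (S (t!0)). \<beta> (p * y1 * S (t!3)) (q * y2 * S (t!2)))
       = (\<Sum>(c1, c2)\<leftarrow>\<Delta> (S (t!0) * t!1). \<beta> (c1 * S (t!3)) (c2 * S (t!2)))"
      by (subst D_mult_sum[OF vW], rule bilI, (intro linA_rules lin_bil1[OF b] lin_bil2[OF b])+, rule sum_list_swap2)
  qed
  also have "\<dots> = SW \<Delta> 2 a (\<lambda>t. \<Sum>(x, y)\<leftarrow>\<Delta> (t!0). \<Sum>(c1, c2)\<leftarrow>\<Delta> (S x * y). \<beta> (c1 * S (t!2)) (c2 * S (t!1)))"
  proof (rule SW_expand'[OF vW, where k=0, symmetric])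
    show "mlin sA sW 3 (\<lambda>t. \<Sum>(c1, c2)\<leftarrow>\<Delta> (S (t!0) * t!1). \<beta> (c1 * S (t!3)) (c2 * S (t!2)))"
      apply (rule mlin3I; simp)
      apply (rule lin_Dsum[OF vW], rule bilI, (intro linA_rules lin_bil1[OF b] lin_bil2[OF b])+)+
      apply (intro lin_sum2[OF vW] linA_rules lin_bil1[OF b] lin_bil2[OF b])+
      done
  qed (auto simp: length_Suc_conv numeral_eq_Suc)
  also have "\<dots> = SW \<Delta> 2 a (\<lambda>t. sW (\<epsilon> (t!0)) (\<beta> (S (t!2)) (S (t!1))))"
  proof (rule SW_cong)
    fix t :: "'a list"
    have "(\<Sum>(x, y)\<leftarrow>\<Delta> (t!0). \<Sum>(c1, c2)\<leftarrow>\<Delta> (S x * y). \<beta> (c1 * S (t!2)) (c2 * S (t!1)))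
        = sW (\<epsilon> (t!0)) (\<Sum>(c1, c2)\<leftarrow>\<Delta> 1. \<beta> (c1 * S (t!2)) (c2 * S (t!1)))"
      by (rule AP_l[where f="\<lambda>z. \<Sum>(c1, c2)\<leftarrow>\<Delta> z. \<beta> (c1 * S (t!2)) (c2 * S (t!1))"],
          rule lin_Dsum[OF vW], rule bilI, (intro linA_rules lin_bil1[OF b] lin_bil2[OF b])+)
    also have "\<dots> = sW (\<epsilon> (t!0)) (\<beta> (S (t!2)) (S (t!1)))"
      by (subst D_one_sum[OF vW], rule bilI, (intro linA_rules lin_bil1[OF b] lin_bil2[OF b])+, simp)
    finally show "(\<Sum>(x, y)\<leftarrow>\<Delta> (t!0). \<Sum>(c1, c2)\<leftarrow>\<Delta> (S x * y). \<beta> (c1 * S (t!2)) (c2 * S (t!1)))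
        = sW (\<epsilon> (t!0)) (\<beta> (S (t!2)) (S (t!1)))" .
  qed
  also have "\<dots> = (\<Sum>(u, r)\<leftarrow>\<Delta> a. sW (\<epsilon> u) (\<Sum>(x, y)\<leftarrow>\<Delta> r. \<beta> (S y) (S x)))"
    by (simp add: numeral_eq_Suc vs_scale_sum_list2[OF vW])
  also have "\<dots> = (\<Sum>(u, v)\<leftarrow>\<Delta> a. \<beta> (S v) (S u))"
    by (rule CU_l[OF vW], rule lin_Dsum[OF vW], rule bilI, (intro linA_rules lin_bil1[OF b] lin_bil2[OF b])+)
  finally show ?thesis .
qed


lemma TA_lin: "lin sA sW f \<Longrightarrow> (\<Sum>(u, v)\<leftarrow>\<Delta> a. f (v * T u)) = sW (\<epsilon> a) (f 1)"
  using lin_sum_list2[of sA sW f "\<lambda>u v. v * T u" "\<Delta> a"] TA[of a] by (simp add: lin_def)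

section \<open>Module algebras\<close>

lemma ma_lin_a: "module_algebra sA \<Delta> sR act \<Longrightarrow> lin sA sR (\<lambda>a. act a x)"
  by (simp add: module_algebra_def Vector_Spaces.linear_iff lin_def)
lemma ma_lin_x: "module_algebra sA \<Delta> sR act \<Longrightarrow> lin sR sR (act a)"
  by (simp add: module_algebra_def Vector_Spaces.linear_iff lin_def)
lemma ma_comp: "module_algebra sA \<Delta> sR act \<Longrightarrow> act (a * b) x = act a (act b x)"
  by (simp add: module_algebra_def)
lemma ma_one: "module_algebra sA \<Delta> sR act \<Longrightarrow> act 1 x = x"
  by (simp add: module_algebra_def)
lemma ma_prod: "module_algebra sA \<Delta> sR act \<Longrightarrow> act a (x * x') = (\<Sum>(u, v)\<leftarrow>\<Delta> a. act u x * act v x')"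
  by (simp add: module_algebra_def)

lemma lin_act_a: "module_algebra sA \<Delta> sR act \<Longrightarrow> lin s sA g \<Longrightarrow> lin s sR (\<lambda>x. act (g x) y)"
  using ma_lin_a[of act y] by (simp add: lin_def)
lemma lin_act_x: "module_algebra sA \<Delta> sR act \<Longrightarrow> lin s sR g \<Longrightarrow> lin s sR (\<lambda>x. act a (g x))"
  using ma_lin_x[of act a] by (simp add: lin_def)

lemma ma_scale: "module_algebra sA \<Delta> sR act \<Longrightarrow> act (sA c a) x = sR c (act a x)"
  using ma_lin_a[of act x] by (simp add: lin_def)

lemma AZ:
  assumes ma: "module_algebra sA \<Delta> sR act"
  shows "act v w * z = (\<Sum>(v1, v2)\<leftarrow>\<Delta> v. act v1 (w * act (S v2) z))"
proof -
  have "(\<Sum>(v1, v2)\<leftarrow>\<Delta> v. act v1 (w * act (S v2) z))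
      = (\<Sum>(v1, v2)\<leftarrow>\<Delta> v. \<Sum>(p, q)\<leftarrow>\<Delta> v1. act p w * act (q * S v2) z)"
    by (simp add: ma_prod[OF ma] ma_comp[OF ma])
  also have "\<dots> = (\<Sum>(u, r)\<leftarrow>\<Delta> v. \<Sum>(p, q)\<leftarrow>\<Delta> r. act u w * act (p * S q) z)"
    by (rule D_coassoc_V[OF vsR], auto intro!: linA_rules lin_act_a[OF ma] lin_multR_l lin_multR_r)
  also have "\<dots> = (\<Sum>(u, r)\<leftarrow>\<Delta> v. sR (\<epsilon> r) (act u w * z))"
    by (subst AP_r[where f="\<lambda>y. act _ w * act y z"], auto intro!: linA_rules lin_act_a[OF ma] lin_multR_l lin_multR_r simp: ma_one[OF ma])
  also have "\<dots> = act v w * z"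
    by (rule CU_r[OF vsR], auto intro!: linA_rules lin_act_a[OF ma] lin_multR_l lin_multR_r)
  finally show ?thesis by simp
qed

section \<open>Multipliers\<close>

lemma nd_r: "(\<And>z. x * z = y * (z::'r)) \<Longrightarrow> x = y"
proof -
  assume h: "\<And>z. x * z = y * z"
  have "\<forall>z. (x - y) * z = 0" by (metis h left_diff_distrib right_minus_eq)
  then have "x - y = 0" using nd unfolding nondegenerate_def by blast
  then show ?thesis by simp
qed

lemma nd_l: "(\<And>z. z * x = z * (y::'r)) \<Longrightarrow> x = y"
proof -
  assume h: "\<And>z. z * x = z * y"
  have "\<forall>z. z * (x - y) = 0" by (metis h right_diff_distrib right_minus_eq)
  then have "x - y = 0" using nd unfolding nondegenerate_def by blast
  then show ?thesis by simp
qed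

context
  fixes m :: "'r mult"
  assumes mm: "is_multiplier m"
begin

lemma mm_sf: "snd m x * y = x * fst m y" using mm by (simp add: is_multiplier_def)

lemma mm_lin_fst: "lin sR sR (fst m)"
  unfolding lin_def
proof (intro conjI allI)
  fix x y show "fst m (x + y) = fst m x + fst m y"
    by (rule nd_l) (simp add: mm_sf[symmetric] distrib_left)
next
  fix c x show "fst m (sR c x) = sR c (fst m x)"
    by (rule nd_l) (simp add: mm_sf[symmetric] sR_mult')
qed

lemma mm_lin_snd: "lin sR sR (snd m)"
  unfolding lin_def
proof (intro conjI allI)
  fix x y show "snd m (x + y) = snd m x + snd m y"
    by (rule nd_r) (simp add: mm_sf distrib_right)
next
  fix c x show "snd m (sR c x) = sR c (snd m x)"
    by (rule nd_r) (simp add: mm_sf sR_mult')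
qed

lemma mm_fst_mult: "fst m (x * y) = fst m x * y"
  by (rule nd_l) (simp add: mm_sf[symmetric] mult.assoc[symmetric])

lemma mm_snd_mult: "snd m (x * y) = x * snd m y"
  by (rule nd_r) (simp add: mm_sf mult.assoc)

lemma lin_fst: "lin s sR g \<Longrightarrow> lin s sR (\<lambda>x. fst m (g x))"
  using mm_lin_fst by (simp add: lin_def)
lemma lin_snd: "lin s sR g \<Longrightarrow> lin s sR (\<lambda>x. snd m (g x))"
  using mm_lin_snd by (simp add: lin_def)

end

lemma fst_msum: "fst (msum (map (\<lambda>(u, v). f u v) xs)) x = (\<Sum>(u, v)\<leftarrow>xs. fst (f u v) x)"
  by (induction xs) (auto simp: msum_def madd_def)
lemma snd_msum: "snd (msum (map (\<lambda>(u, v). f u v) xs)) x = (\<Sum>(u, v)\<leftarrow>xs. snd (f u v) x)"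
  by (induction xs) (auto simp: msum_def madd_def)

lemma gm: "is_multiplier (\<gamma> a)" using coc by (simp add: cocycle_equivalent_def)
lemma g_add: "\<gamma> (a + b) = madd (\<gamma> a) (\<gamma> b)" using coc by (simp add: cocycle_equivalent_def)
lemma g_scale: "\<gamma> (sA c a) = mscale sR c (\<gamma> a)" using coc by (simp add: cocycle_equivalent_def)
lemma g_one: "\<gamma> 1 = mone" using coc by (simp add: cocycle_equivalent_def)

lemma g_lin_fst: "lin sA sR (\<lambda>a. fst (\<gamma> a) x)"
  by (simp add: lin_def g_add g_scale madd_def mscale_def)
lemma g_lin_snd: "lin sA sR (\<lambda>a. snd (\<gamma> a) x)"
  by (simp add: lin_def g_add g_scale madd_def mscale_def)
lemma lin_gfst_a: "lin s sA g \<Longrightarrow> lin s sR (\<lambda>x. fst (\<gamma> (g x)) y)"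
  using g_lin_fst[of y] by (simp add: lin_def)
lemma lin_gsnd_a: "lin s sA g \<Longrightarrow> lin s sR (\<lambda>x. snd (\<gamma> (g x)) y)"
  using g_lin_snd[of y] by (simp add: lin_def)
lemma lin_gfst_x: "lin s sR g \<Longrightarrow> lin s sR (\<lambda>x. fst (\<gamma> a) (g x))"
  by (rule lin_fst[OF gm])
lemma lin_gsnd_x: "lin s sR g \<Longrightarrow> lin s sR (\<lambda>x. snd (\<gamma> a) (g x))"
  by (rule lin_snd[OF gm])

lemma coc_fst: "fst (\<gamma> (a * a')) x = (\<Sum>(u, v)\<leftarrow>\<Delta> a. fst (\<gamma> u) (\<Sum>(v1, v2)\<leftarrow>\<Delta> v. act1 v1 (fst (\<gamma> a') (act1 (S v2) x))))"
proof -
  have "\<gamma> (a * a') = msum (map (\<lambda>(u, v). mmult (\<gamma> u) (act_mult \<Delta> S act1 v (\<gamma> a'))) (\<Delta> a))"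
    using coc by (simp add: cocycle_equivalent_def)
  then show ?thesis by (simp add: fst_msum mmult_def act_mult_def)
qed

lemma coc_snd: "snd (\<gamma> (a * a')) x = (\<Sum>(u, v)\<leftarrow>\<Delta> a. snd (act_mult \<Delta> S act1 v (\<gamma> a')) (snd (\<gamma> u) x))"
proof -
  have "\<gamma> (a * a') = msum (map (\<lambda>(u, v). mmult (\<gamma> u) (act_mult \<Delta> S act1 v (\<gamma> a'))) (\<Delta> a))"
    using coc by (simp add: cocycle_equivalent_def)
  then show ?thesis by (simp add: snd_msum mmult_def)
qed

lemma coc_ii: "(\<Sum>(u, v)\<leftarrow>\<Delta> a. snd (\<gamma> v) (act2 u x)) = (\<Sum>(u, v)\<leftarrow>\<Delta> a. fst (\<gamma> u) (act1 v x))"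
  using coc by (simp add: cocycle_equivalent_def)

lemma am_fst: "fst (act_mult \<Delta> S act v m) y = (\<Sum>(v1, v2)\<leftarrow>\<Delta> v. act v1 (fst m (act (S v2) y)))"
  by (simp add: act_mult_def)
lemma am_snd: "snd (act_mult \<Delta> S act v m) x = (\<Sum>(v1, v2)\<leftarrow>\<Delta> v. act v2 (snd m (act (T v1) x)))"
  by (simp add: act_mult_def T_def)


lemma sum_mult_right_R: "(\<Sum>(u, v)\<leftarrow>xs. f u v) * (y::'r) = (\<Sum>(u, v)\<leftarrow>xs. f u v * y)"
  by (induction xs) (auto simp: distrib_right)
lemma sum_mult_left_R: "(y::'r) * (\<Sum>(u, v)\<leftarrow>xs. f u v) = (\<Sum>(u, v)\<leftarrow>xs. y * f u v)"
  by (induction xs) (auto simp: distrib_left)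

lemmas linR1_rules = linA_rules lin_T lin_act_a[OF ma1] lin_act_x[OF ma1] lin_multR_l lin_multR_r
  lin_gfst_a lin_gsnd_a lin_gfst_x lin_gsnd_x lin_scale_l[OF vsR] lin_scale_r[OF vsR]

lemma am_mult:
  assumes mm: "is_multiplier m"
  shows "is_multiplier (act_mult \<Delta> S act1 b m)"
  unfolding is_multiplier_def
proof (intro allI)
  fix x y
  define F where "F t = act1 (t!1 * T (t!0)) x * act1 (t!2) (fst m (act1 (S (t!3)) y))" for t
  have mF: "mlin sA sR 3 F"
    unfolding F_def by (rule mlin3I; simp) (intro linR1_rules lin_fst[OF mm])+
  have "snd (act_mult \<Delta> S act1 b m) x * y = (\<Sum>(b1, b2)\<leftarrow>\<Delta> b. act1 b2 (snd m (act1 (T b1) x)) * y)"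
    by (simp add: am_snd sum_mult_right_R)
  also have "\<dots> = (\<Sum>(b1, b2)\<leftarrow>\<Delta> b. \<Sum>(c1, c2)\<leftarrow>\<Delta> b2. act1 c1 (snd m (act1 (T b1) x) * act1 (S c2) y))"
    by (simp only: AZ[OF ma1])
  also have "\<dots> = (\<Sum>(b1, b2)\<leftarrow>\<Delta> b. \<Sum>(c1, c2)\<leftarrow>\<Delta> b2. \<Sum>(d1, d2)\<leftarrow>\<Delta> c1. act1 d1 (act1 (T b1) x) * act1 d2 (fst m (act1 (S c2) y)))"
    by (simp only: mm_sf[OF mm] ma_prod[OF ma1])
  also have "\<dots> = SW \<Delta> 2 b (\<lambda>t. \<Sum>(p, q)\<leftarrow>\<Delta> (t!1). F [t!0, p, q, t!2])"
    by (simp add: numeral_eq_Suc F_def ma_comp[OF ma1])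
  also have "\<dots> = SW \<Delta> 3 b F"
    by (rule SW_expand'[OF vsR, where k=1, OF _ mF]) (auto simp: length_Suc_conv numeral_eq_Suc)
  also have "\<dots> = SW \<Delta> 2 b (\<lambda>t. \<Sum>(p, q)\<leftarrow>\<Delta> (t!0). F [p, q, t!1, t!2])"
    by (rule SW_expand'[OF vsR, where k=0, OF _ mF, symmetric]) (auto simp: length_Suc_conv numeral_eq_Suc)
  also have "\<dots> = SW \<Delta> 2 b (\<lambda>t. sR (\<epsilon> (t!0)) (x * act1 (t!1) (fst m (act1 (S (t!2)) y))))"
  proof (rule SW_cong)
    fix t :: "'a list"
    show "(\<Sum>(p, q)\<leftarrow>\<Delta> (t!0). F [p, q, t!1, t!2]) = sR (\<epsilon> (t!0)) (x * act1 (t!1) (fst m (act1 (S (t!2)) y)))"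
    proof -
      have "(\<Sum>(p, q)\<leftarrow>\<Delta> (t!0). F [p, q, t!1, t!2]) = (\<Sum>(p, q)\<leftarrow>\<Delta> (t!0). (\<lambda>z. act1 z x * act1 (t!1) (fst m (act1 (S (t!2)) y))) (q * T p))"
        by (simp add: F_def)
      also have "\<dots> = sR (\<epsilon> (t!0)) (act1 1 x * act1 (t!1) (fst m (act1 (S (t!2)) y)))"
        by (rule TA_lin, (intro linR1_rules)+)
      finally show ?thesis by (simp add: ma_one[OF ma1])
    qed
  qed
  also have "\<dots> = (\<Sum>(u, r)\<leftarrow>\<Delta> b. sR (\<epsilon> u) (\<Sum>(p, q)\<leftarrow>\<Delta> r. x * act1 p (fst m (act1 (S q) y))))"
    by (simp add: numeral_eq_Suc vs_scale_sum_list2[OF vsR])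
  also have "\<dots> = (\<Sum>(p, q)\<leftarrow>\<Delta> b. x * act1 p (fst m (act1 (S q) y)))"
    by (rule CU_l[OF vsR], rule lin_Dsum[OF vsR], rule bilI, (intro linR1_rules lin_fst[OF mm])+)
  also have "\<dots> = x * fst (act_mult \<Delta> S act1 b m) y"
    by (simp add: am_fst sum_mult_left_R)
  finally show "snd (act_mult \<Delta> S act1 b m) x * y = x * fst (act_mult \<Delta> S act1 b m) y" .
qed


lemma Hcore:
  "(\<Sum>(u, v)\<leftarrow>\<Delta> c. snd (\<gamma> (v * p)) (x * act2 u x')) = (\<Sum>(u, v)\<leftarrow>\<Delta> c. snd (\<gamma> u) x * act1 v (snd (\<gamma> p) x'))"
proof (rule nd_r)
  fix z
  define F2 where "F2 t = x * fst (\<gamma> (t!0)) (act1 (t!1) x') * act1 (t!2) (fst (\<gamma> p) (act1 (S (t!3)) z))" for t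
  define F1 where "F1 t = x * act2 (t!0) x' * fst (\<gamma> (t!1)) (act1 (t!2) (fst (\<gamma> p) (act1 (S (t!3)) z)))" for t
  have mF1: "mlin sA sR 3 F1"
    unfolding F1_def by (rule mlin3I; simp) (intro linR1_rules lin_act_a[OF ma2])+
  have mF2: "mlin sA sR 3 F2"
    unfolding F2_def by (rule mlin3I; simp) (intro linR1_rules)+
  have "(\<Sum>(u, v)\<leftarrow>\<Delta> c. snd (\<gamma> (v * p)) (x * act2 u x')) * z = (\<Sum>(u, v)\<leftarrow>\<Delta> c. (x * act2 u x') * fst (\<gamma> (v * p)) z)"
    by (simp add: sum_mult_right_R mm_sf[OF gm])
  also have "\<dots> = (\<Sum>(u, v)\<leftarrow>\<Delta> c. \<Sum>(v1, v2)\<leftarrow>\<Delta> v. \<Sum>(s1, s2)\<leftarrow>\<Delta> v2. x * act2 u x' * fst (\<gamma> v1) (act1 s1 (fst (\<gamma> p) (act1 (S s2) z))))"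
    by (simp add: coc_fst sum_mult_left_R lin_sum_list2[OF mm_lin_fst[OF gm]])
  also have "\<dots> = SW \<Delta> 3 c F1"
    by (simp add: numeral_eq_Suc F1_def)
  also have "\<dots> = SW \<Delta> 2 c (\<lambda>t. \<Sum>(u, v)\<leftarrow>\<Delta> (t!0). F1 [u, v, t!1, t!2])"
    by (rule SW_expand'[OF vsR, where k=0, OF _ mF1, symmetric]) (auto simp: length_Suc_conv numeral_eq_Suc)
  also have "\<dots> = SW \<Delta> 2 c (\<lambda>t. \<Sum>(u, v)\<leftarrow>\<Delta> (t!0). F2 [u, v, t!1, t!2])"
  proof (rule SW_cong)
    fix t :: "'a list"
    define Y where "Y = act1 (t!1) (fst (\<gamma> p) (act1 (S (t!2)) z))"
    have "(\<Sum>(u, v)\<leftarrow>\<Delta> (t!0). F1 [u, v, t!1, t!2]) = (\<Sum>(u, v)\<leftarrow>\<Delta> (t!0). x * (snd (\<gamma> v) (act2 u x') * Y))"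
      by (simp add: F1_def Y_def mm_sf[OF gm] mult.assoc)
    also have "\<dots> = x * ((\<Sum>(u, v)\<leftarrow>\<Delta> (t!0). snd (\<gamma> v) (act2 u x')) * Y)"
      by (simp add: sum_mult_right_R sum_mult_left_R)
    also have "\<dots> = x * ((\<Sum>(u, v)\<leftarrow>\<Delta> (t!0). fst (\<gamma> u) (act1 v x')) * Y)"
      by (simp add: coc_ii)
    also have "\<dots> = (\<Sum>(u, v)\<leftarrow>\<Delta> (t!0). F2 [u, v, t!1, t!2])"
      by (simp add: F2_def Y_def sum_mult_right_R sum_mult_left_R mult.assoc)
    finally show "(\<Sum>(u, v)\<leftarrow>\<Delta> (t!0). F1 [u, v, t!1, t!2]) = (\<Sum>(u, v)\<leftarrow>\<Delta> (t!0). F2 [u, v, t!1, t!2])" .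
  qed
  also have "\<dots> = SW \<Delta> 3 c F2"
    by (rule SW_expand'[OF vsR, where k=0, OF _ mF2]) (auto simp: length_Suc_conv numeral_eq_Suc)
  also have "\<dots> = SW \<Delta> 2 c (\<lambda>t. \<Sum>(q1, q2)\<leftarrow>\<Delta> (t!1). F2 [t!0, q1, q2, t!2])"
    by (rule SW_expand'[OF vsR, where k=1, OF _ mF2, symmetric]) (auto simp: length_Suc_conv numeral_eq_Suc)
  also have "\<dots> = (\<Sum>(u, v)\<leftarrow>\<Delta> c. \<Sum>(v1, v2)\<leftarrow>\<Delta> v. \<Sum>(q1, q2)\<leftarrow>\<Delta> v1. snd (\<gamma> u) x * (act1 q1 x' * act1 q2 (fst (\<gamma> p) (act1 (S v2) z))))"
    by (simp add: numeral_eq_Suc F2_def mm_sf[OF gm] mm_fst_mult[OF gm] mult.assoc)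
  also have "\<dots> = (\<Sum>(u, v)\<leftarrow>\<Delta> c. snd (\<gamma> u) x * (\<Sum>(v1, v2)\<leftarrow>\<Delta> v. act1 v1 (snd (\<gamma> p) x' * act1 (S v2) z)))"
    by (simp only: mm_sf[OF gm] ma_prod[OF ma1] sum_mult_left_R)
  also have "\<dots> = (\<Sum>(u, v)\<leftarrow>\<Delta> c. snd (\<gamma> u) x * (act1 v (snd (\<gamma> p) x') * z))"
    by (simp only: AZ[OF ma1])
  also have "\<dots> = (\<Sum>(u, v)\<leftarrow>\<Delta> c. snd (\<gamma> u) x * act1 v (snd (\<gamma> p) x')) * z"
    by (simp add: sum_mult_right_R mult.assoc)
  finally show "(\<Sum>(u, v)\<leftarrow>\<Delta> c. snd (\<gamma> (v * p)) (x * act2 u x')) * z = (\<Sum>(u, v)\<leftarrow>\<Delta> c. snd (\<gamma> u) x * act1 v (snd (\<gamma> p) x')) * z" .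
qed


definition rho :: "'a \<Rightarrow> 'r \<Rightarrow> 'r" where
  "rho v y = (\<Sum>(v1, v2)\<leftarrow>\<Delta> v. snd (act_mult \<Delta> S act1 v1 (\<gamma> (S v2))) y)"

lemmas linR_all = lin_sum2[OF vsR] lin_Dsum[OF vsR] bilI linR1_rules

lemma RI: "(\<Sum>(u, v)\<leftarrow>\<Delta> e. rho v (snd (\<gamma> u) x)) = sR (\<epsilon> e) x"
proof -
  define F where "F t = snd (act_mult \<Delta> S act1 (t!1) (\<gamma> (S (t!2)))) (snd (\<gamma> (t!0)) x)" for t
  have mF: "mlin sA sR 2 F"
    unfolding F_def am_snd by (rule mlin2I; simp) (intro linR_all)+
  have "(\<Sum>(u, v)\<leftarrow>\<Delta> e. rho v (snd (\<gamma> u) x)) = SW \<Delta> 2 e F"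
    by (simp add: numeral_eq_Suc F_def rho_def)
  also have "\<dots> = SW \<Delta> 1 e (\<lambda>t. \<Sum>(u, v)\<leftarrow>\<Delta> (t!0). F [u, v, t!1])"
    by (rule SW_expand'[OF vsR, where k=0, OF _ mF, symmetric]) (auto simp: length_Suc_conv numeral_eq_Suc)
  also have "\<dots> = (\<Sum>(f, g)\<leftarrow>\<Delta> e. snd (\<gamma> (f * S g)) x)"
    by (simp add: F_def coc_snd)
  also have "\<dots> = sR (\<epsilon> e) (snd (\<gamma> 1) x)"
    by (rule AP_r, rule g_lin_snd)
  finally show ?thesis by (simp add: g_one mone_def)
qed

lemma SW_lin_map: "lin s sW f \<Longrightarrow> SW \<Delta> n a (\<lambda>t. f (G t)) = f (SW \<Delta> n a G)"
  by (induction n arbitrary: a G) (simp_all add: lin_sum_list2)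

lemma Kd: "SW \<Delta> 3 d (\<lambda>t. fst (\<gamma> (S (t!2))) (act1 (S (t!1)) (fst (\<gamma> (t!3)) (act1 (S (S (t!0))) y)))) = sR (\<epsilon> d) y"
proof -
  define X where "X t = fst (\<gamma> (S (t!2))) (act1 (S (t!1)) (fst (\<gamma> (t!3)) (act1 (S (S (t!0))) y)))" for t
  define Y where "Y t = (\<Sum>(k1, k2)\<leftarrow>\<Delta> (t!0). X [k1, k2, t!1, t!2])" for t
  have mX: "mlin sA sR 3 X"
    unfolding X_def by (rule mlin3I; simp) (intro linR_all)+
  have mY: "mlin sA sR 2 Y"
    unfolding Y_def X_def by (rule mlin2I; simp) (intro linR_all)+
  have "sR (\<epsilon> d) y = sR (\<epsilon> d) (fst (\<gamma> 1) y)" by (simp add: g_one mone_def)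
  also have "\<dots> = (\<Sum>(g, h)\<leftarrow>\<Delta> d. fst (\<gamma> (S g * h)) y)"
    by (rule AP_l[symmetric], rule g_lin_fst)
  also have "\<dots> = (\<Sum>(g, h)\<leftarrow>\<Delta> d. \<Sum>(u, v)\<leftarrow>\<Delta> (S g). fst (\<gamma> u) (\<Sum>(v1, v2)\<leftarrow>\<Delta> v. act1 v1 (fst (\<gamma> h) (act1 (S v2) y))))"
    by (simp add: coc_fst)
  also have "\<dots> = (\<Sum>(g, h)\<leftarrow>\<Delta> d. \<Sum>(g1, g2)\<leftarrow>\<Delta> g. fst (\<gamma> (S g2)) (\<Sum>(v1, v2)\<leftarrow>\<Delta> (S g1). act1 v1 (fst (\<gamma> h) (act1 (S v2) y))))"
  proof -
    have "(\<Sum>(u, v)\<leftarrow>\<Delta> (S g). fst (\<gamma> u) (\<Sum>(v1, v2)\<leftarrow>\<Delta> v. act1 v1 (fst (\<gamma> h) (act1 (S v2) y))))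
      = (\<Sum>(g1, g2)\<leftarrow>\<Delta> g. fst (\<gamma> (S g2)) (\<Sum>(v1, v2)\<leftarrow>\<Delta> (S g1). act1 v1 (fst (\<gamma> h) (act1 (S v2) y))))" for g h
      by (rule DS[OF vsR], (intro linR_all)+)
    then show ?thesis by simp
  qed
  also have "\<dots> = (\<Sum>(g, h)\<leftarrow>\<Delta> d. \<Sum>(g1, g2)\<leftarrow>\<Delta> g. \<Sum>(k1, k2)\<leftarrow>\<Delta> g1. X [k1, k2, g2, h])"
  proof -
    have "(\<Sum>(v1, v2)\<leftarrow>\<Delta> (S g1). act1 v1 (fst (\<gamma> h) (act1 (S v2) y)))
      = (\<Sum>(k1, k2)\<leftarrow>\<Delta> g1. act1 (S k2) (fst (\<gamma> h) (act1 (S (S k1)) y)))" for g1 h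
      by (rule DS[OF vsR], (intro linR_all)+)
    then show ?thesis by (simp add: X_def lin_sum_list2[OF mm_lin_fst[OF gm]])
  qed
  also have "\<dots> = SW \<Delta> 1 d (\<lambda>t. \<Sum>(g1, g2)\<leftarrow>\<Delta> (t!0). Y [g1, g2, t!1])"
    by (simp add: Y_def)
  also have "\<dots> = SW \<Delta> 2 d Y"
    by (rule SW_expand'[OF vsR, where k=0, OF _ mY]) (auto simp: length_Suc_conv numeral_eq_Suc)
  also have "\<dots> = SW \<Delta> 3 d X"
    by (rule SW_expand'[OF vsR, where k=0, OF _ mX]) (auto simp: length_Suc_conv numeral_eq_Suc Y_def)
  finally have "sR (\<epsilon> d) y = SW \<Delta> 3 d X" .
  then show ?thesis unfolding X_def[abs_def] by simp
qed


lemma Mz: "(\<Sum>(u, v)\<leftarrow>\<Delta> b. \<Sum>(u1, u2)\<leftarrow>\<Delta> u. fst (act_mult \<Delta> S act1 u1 (\<gamma> (S u2))) (fst (\<gamma> v) z)) = sR (\<epsilon> b) z"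
proof -
  define M3 where "M3 t = fst (act_mult \<Delta> S act1 (t!0) (\<gamma> (S (t!1)))) (fst (\<gamma> (t!2)) z)" for t
  define M4 where "M4 t = act1 (t!0) (fst (\<gamma> (S (t!2))) (act1 (S (t!1)) (fst (\<gamma> (t!3)) z)))" for t
  define F6 where "F6 t = act1 (t!0) (fst (\<gamma> (S (t!4))) (act1 (S (t!3)) (fst (\<gamma> (t!5)) (act1 (S (S (t!2))) (act1 (S (t!1)) z)))))" for t
  define H where "H t = sR (\<epsilon> (t!1)) (M4 [t!0, t!2, t!3, t!4])" for t
  have mM3: "mlin sA sR 2 M3"
    unfolding M3_def am_fst by (rule mlin2I; simp) (intro linR_all)+
  have mM4: "mlin sA sR 3 M4"
    unfolding M4_def by (rule mlin3I; simp) (intro linR_all)+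
  have mF6: "mlin sA sR 5 F6"
    unfolding F6_def by (rule mlin5I; simp) (intro linR_all)+
  have mH: "mlin sA sR 4 H"
    unfolding H_def M4_def by (rule mlin4I; simp) (intro linR_all lin_eps lin_scale_l[OF vsR])+
  have "(\<Sum>(u, v)\<leftarrow>\<Delta> b. \<Sum>(u1, u2)\<leftarrow>\<Delta> u. fst (act_mult \<Delta> S act1 u1 (\<gamma> (S u2))) (fst (\<gamma> v) z))
      = SW \<Delta> 1 b (\<lambda>t. \<Sum>(u1, u2)\<leftarrow>\<Delta> (t!0). M3 [u1, u2, t!1])"
    by (simp add: M3_def)
  also have "\<dots> = SW \<Delta> 2 b M3"
    by (rule SW_expand'[OF vsR, where k=0, OF _ mM3]) (auto simp: length_Suc_conv numeral_eq_Suc)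
  also have "\<dots> = SW \<Delta> 2 b (\<lambda>t. \<Sum>(p, q)\<leftarrow>\<Delta> (t!0). M4 [p, q, t!1, t!2])"
    by (rule SW_cong) (simp add: M3_def M4_def am_fst)
  also have "\<dots> = SW \<Delta> 3 b M4"
    by (rule SW_expand'[OF vsR, where k=0, OF _ mM4]) (auto simp: length_Suc_conv numeral_eq_Suc)
  also have "\<dots> = SW \<Delta> 3 b (\<lambda>t. \<Sum>(p, q)\<leftarrow>\<Delta> (t!0). H [p, q, t!1, t!2, t!3])"
  proof (rule SW_cong)
    fix t :: "'a list" assume lt: "length t = Suc 3"
    have tt: "t = [t!0, t!1, t!2, t!3]"
      using lt by (auto simp: length_Suc_conv numeral_eq_Suc)
    have "(\<Sum>(p, q)\<leftarrow>\<Delta> (t!0). H [p, q, t!1, t!2, t!3]) = (\<Sum>(p, q)\<leftarrow>\<Delta> (t!0). sR (\<epsilon> q) (M4 [p, t!1, t!2, t!3]))"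
      by (simp add: H_def)
    also have "\<dots> = M4 [t!0, t!1, t!2, t!3]"
      by (rule CU_r[OF vsR]) (unfold M4_def, simp, (intro linR_all)+)
    finally show "M4 t = (\<Sum>(p, q)\<leftarrow>\<Delta> (t!0). H [p, q, t!1, t!2, t!3])" using tt by simp
  qed
  also have "\<dots> = SW \<Delta> 4 b H"
    by (rule SW_expand'[OF vsR, where k=0, OF _ mH]) (auto simp: length_Suc_conv numeral_eq_Suc)
  also have "\<dots> = SW \<Delta> 4 b (\<lambda>t. \<Sum>(p, q)\<leftarrow>\<Delta> (t!1). F6 [t!0, p, q, t!2, t!3, t!4])"
  proof (rule SW_cong)
    fix t :: "'a list"
    have "(\<Sum>(p, q)\<leftarrow>\<Delta> (t!1). F6 [t!0, p, q, t!2, t!3, t!4])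
      = (\<Sum>(p, q)\<leftarrow>\<Delta> (t!1). (\<lambda>w. act1 (t!0) (fst (\<gamma> (S (t!3))) (act1 (S (t!2)) (fst (\<gamma> (t!4)) (act1 (S w) z))))) (p * S q))"
      by (simp add: F6_def S_mult ma_comp[OF ma1])
    also have "\<dots> = sR (\<epsilon> (t!1)) (act1 (t!0) (fst (\<gamma> (S (t!3))) (act1 (S (t!2)) (fst (\<gamma> (t!4)) (act1 (S 1) z)))))"
      by (rule AP_r, (intro linR_all)+)
    also have "\<dots> = H t"
      by (simp add: H_def M4_def S_one ma_one[OF ma1])
    finally show "H t = (\<Sum>(p, q)\<leftarrow>\<Delta> (t!1). F6 [t!0, p, q, t!2, t!3, t!4])" by simp
  qed
  also have "\<dots> = SW \<Delta> 5 b F6"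
    by (rule SW_expand'[OF vsR, where k=1, OF _ mF6]) (auto simp: length_Suc_conv numeral_eq_Suc)
  also have "\<dots> = SW \<Delta> 2 b (\<lambda>t. SW \<Delta> 3 (t!2) (\<lambda>d. F6 (t!0 # t!1 # d)))"
    by (simp add: numeral_eq_Suc)
  also have "\<dots> = SW \<Delta> 2 b (\<lambda>t. act1 (t!0) (sR (\<epsilon> (t!2)) (act1 (S (t!1)) z)))"
  proof (rule SW_cong)
    fix t :: "'a list"
    have "SW \<Delta> 3 (t!2) (\<lambda>d. F6 (t!0 # t!1 # d)) = SW \<Delta> 3 (t!2) (\<lambda>d. act1 (t!0)
        (fst (\<gamma> (S (d!2))) (act1 (S (d!1)) (fst (\<gamma> (d!3)) (act1 (S (S (d!0))) (act1 (S (t!1)) z))))))"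
      by (rule SW_cong) (simp add: F6_def numeral_eq_Suc)
    also have "\<dots> = act1 (t!0) (SW \<Delta> 3 (t!2) (\<lambda>d.
        fst (\<gamma> (S (d!2))) (act1 (S (d!1)) (fst (\<gamma> (d!3)) (act1 (S (S (d!0))) (act1 (S (t!1)) z))))))"
      by (rule SW_lin_map, rule ma_lin_x[OF ma1])
    also have "\<dots> = act1 (t!0) (sR (\<epsilon> (t!2)) (act1 (S (t!1)) z))"
      by (simp only: Kd)
    finally show "SW \<Delta> 3 (t!2) (\<lambda>d. F6 (t!0 # t!1 # d)) = act1 (t!0) (sR (\<epsilon> (t!2)) (act1 (S (t!1)) z))" .
  qed
  also have "\<dots> = (\<Sum>(u, r)\<leftarrow>\<Delta> b. \<Sum>(p, q)\<leftarrow>\<Delta> r. sR (\<epsilon> q) (act1 u (act1 (S p) z)))"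
    using ma_lin_x[OF ma1] by (simp add: numeral_eq_Suc lin_def)
  also have "\<dots> = (\<Sum>(u, r)\<leftarrow>\<Delta> b. act1 (u * S r) z)"
    by (subst CU_r[OF vsR], (intro linR_all)+, simp add: ma_comp[OF ma1])
  also have "\<dots> = sR (\<epsilon> b) (act1 1 z)"
    by (rule AP_r, (intro linR_all)+)
  finally show ?thesis by (simp add: ma_one[OF ma1])
qed

lemma LI: "(\<Sum>(u, v)\<leftarrow>\<Delta> b. snd (\<gamma> v) (rho u x)) = sR (\<epsilon> b) x"
proof (rule nd_r)
  fix z
  have "(\<Sum>(u, v)\<leftarrow>\<Delta> b. snd (\<gamma> v) (rho u x)) * z
     = (\<Sum>(u, v)\<leftarrow>\<Delta> b. \<Sum>(u1, u2)\<leftarrow>\<Delta> u. snd (act_mult \<Delta> S act1 u1 (\<gamma> (S u2))) x * fst (\<gamma> v) z)"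
    by (simp add: sum_mult_right_R mm_sf[OF gm] rho_def)
  also have "\<dots> = x * (\<Sum>(u, v)\<leftarrow>\<Delta> b. \<Sum>(u1, u2)\<leftarrow>\<Delta> u. fst (act_mult \<Delta> S act1 u1 (\<gamma> (S u2))) (fst (\<gamma> v) z))"
    by (simp add: sum_mult_left_R mm_sf[OF am_mult[OF gm]])
  also have "\<dots> = sR (\<epsilon> b) x * z"
    by (simp add: Mz sR_mult')
  finally show "(\<Sum>(u, v)\<leftarrow>\<Delta> b. snd (\<gamma> v) (rho u x)) * z = sR (\<epsilon> b) x * z" .
qed


section \<open>Tensor level\<close>

lemma tens_eqI: "(\<And>\<phi>. bilin_form sR sA \<phi> \<Longrightarrow> (\<Sum>(x, a)\<leftarrow>xs. \<phi> x a) = (\<Sum>(x, a)\<leftarrow>ys. \<phi> x a)) \<Longrightarrow> tens sR sA xs = tens sR sA ys"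
  by (rule ext) (simp add: tens_def)

lemma tens_eqD: "tens sR sA xs = tens sR sA ys \<Longrightarrow> bilin_form sR sA \<phi> \<Longrightarrow> (\<Sum>(x, a)\<leftarrow>xs. \<phi> x a) = (\<Sum>(x, a)\<leftarrow>ys. \<phi> x a)"
  by (drule fun_cong[of _ _ \<phi>]) (simp add: tens_def)

lemma tens_transfer_RA:
  assumes "tens sR sA xs = tens sR sA ys" "\<And>a. lin sR (*) (\<lambda>x. \<psi> x a)" "\<And>x. lin sA (*) (\<psi> x)"
  shows "(\<Sum>(x, a)\<leftarrow>xs. \<psi> x a) = (\<Sum>(x, a)\<leftarrow>ys. \<psi> x a)"
  by (rule tens_transfer[OF assms(1) vsR vsA vs_complex assms(2,3)])

lemma bf_lin1: "bilin_form sR sA \<phi> \<Longrightarrow> lin s sR g \<Longrightarrow> lin s (*) (\<lambda>x. \<phi> (g x) v)"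
  by (simp add: bilin_form_def Vector_Spaces.linear_iff lin_def)
lemma bf_lin2: "bilin_form sR sA \<phi> \<Longrightarrow> lin s sA g \<Longrightarrow> lin s (*) (\<lambda>x. \<phi> u (g x))"
  by (simp add: bilin_form_def Vector_Spaces.linear_iff lin_def)

lemma trep_tens: "tens sR sA (trep sR sA (tens sR sA xs)) = tens sR sA xs"
  unfolding trep_def by (rule someI_ex) blast

definition Fm :: "('a \<Rightarrow> 'r \<Rightarrow> 'r) \<Rightarrow> ('r \<times> 'a) list \<Rightarrow> ('r \<times> 'a) list" where
  "Fm \<rho> xs = [(\<rho> u x, v). (x, a) \<leftarrow> xs, (u, v) \<leftarrow> \<Delta> a]"

definition Psi :: "('a \<Rightarrow> 'r \<Rightarrow> 'r) \<Rightarrow> (('r \<Rightarrow> 'a \<Rightarrow> complex) \<Rightarrow> complex) \<Rightarrow> (('r \<Rightarrow> 'a \<Rightarrow> complex) \<Rightarrow> complex)" where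
  "Psi \<rho> t = tens sR sA (Fm \<rho> (trep sR sA t))"

definition goodrho :: "('a \<Rightarrow> 'r \<Rightarrow> 'r) \<Rightarrow> bool" where
  "goodrho \<rho> \<longleftrightarrow> (\<forall>x. lin sA sR (\<lambda>u. \<rho> u x)) \<and> (\<forall>u. lin sR sR (\<rho> u))"

lemma sum_Fm: "(\<Sum>(y, b)\<leftarrow>Fm \<rho> xs. \<phi> y b) = (\<Sum>(x, a)\<leftarrow>xs. \<Sum>(u, v)\<leftarrow>\<Delta> a. \<phi> (\<rho> u x) v)"
proof (induction xs)
  case Nil then show ?case by (simp add: Fm_def)
next
  case (Cons p xs)
  then show ?case by (cases p) (simp add: Fm_def sum_map_fst_scale')
qed

lemma Fm_wd:
  assumes g: "goodrho \<rho>" and eq: "tens sR sA xs = tens sR sA ys"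
  shows "tens sR sA (Fm \<rho> xs) = tens sR sA (Fm \<rho> ys)"
proof (rule tens_eqI)
  fix \<phi> :: "'r \<Rightarrow> 'a \<Rightarrow> complex" assume bf: "bilin_form sR sA \<phi>"
  have l1: "lin sA sR (\<lambda>u. \<rho> u x)" and l2: "lin sR sR (\<rho> u)" for x u using g by (auto simp: goodrho_def)
  show "(\<Sum>(x, a)\<leftarrow>Fm \<rho> xs. \<phi> x a) = (\<Sum>(x, a)\<leftarrow>Fm \<rho> ys. \<phi> x a)"
    unfolding sum_Fm
    by (rule tens_transfer_RA[OF eq], (intro lin_sum2[OF vs_complex] lin_Dsum[OF vs_complex] bilI
        bf_lin1[OF bf] bf_lin2[OF bf] l1 l2 lin_id)+)
qed

lemma Psi_tens: "goodrho \<rho> \<Longrightarrow> Psi \<rho> (tens sR sA xs) = tens sR sA (Fm \<rho> xs)"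
  unfolding Psi_def by (rule Fm_wd, assumption, rule trep_tens)

lemma tadd_tens: "tadd (tens sR sA xs) (tens sR sA ys) = tens sR sA (xs @ ys)"
  by (rule ext) (simp add: tadd_def tens_def)

lemma tscale_tens: "tscale c (tens sR sA xs) = tens sR sA (map (\<lambda>(x, a). (sR c x, a)) xs)"
proof (rule ext)
  fix \<phi> :: "'r \<Rightarrow> 'a \<Rightarrow> complex"
  show "tscale c (tens sR sA xs) \<phi> = tens sR sA (map (\<lambda>(x, a). (sR c x, a)) xs) \<phi>"
  proof (cases "bilin_form sR sA \<phi>")
    case True
    have "lin sR (*) (\<lambda>x. \<phi> x a)" for a by (rule bf_lin1[OF True lin_id])
    then have h: "\<phi> (sR c x) a = c * \<phi> x a" for x a by (simp add: lin_def)
    have "(\<Sum>(x, a)\<leftarrow>map (\<lambda>(x, a). (sR c x, a)) xs. \<phi> x a) = (\<Sum>(x, a)\<leftarrow>xs. \<phi> (sR c x) a)"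
      by (rule sum_map_fst_scale)
    also have "\<dots> = (\<Sum>(x, a)\<leftarrow>xs. c * \<phi> x a)" by (simp only: h)
    also have "\<dots> = c * (\<Sum>(x, a)\<leftarrow>xs. \<phi> x a)" by (rule vs_scale_sum_list2[OF vs_complex, symmetric])
    finally show ?thesis using True by (simp add: tscale_def tens_def)
  qed (simp add: tscale_def tens_def)
qed

lemma Fm_append: "Fm \<rho> (xs @ ys) = Fm \<rho> xs @ Fm \<rho> ys"
  by (simp add: Fm_def)

lemma Fm_scale:
  assumes g: "goodrho \<rho>"
  shows "Fm \<rho> (map (\<lambda>(x, a). (sR c x, a)) xs) = map (\<lambda>(x, a). (sR c x, a)) (Fm \<rho> xs)"
proof -
  have h: "\<rho> u (sR c x) = sR c (\<rho> u x)" for u x using g by (simp add: goodrho_def lin_def)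
  show ?thesis by (induction xs) (auto simp: Fm_def h)
qed



lemma Fm_comp:
  assumes gr: "goodrho \<rho>" and gs: "goodrho \<sigma>"
    and inv: "\<And>e x. (\<Sum>(u, v)\<leftarrow>\<Delta> e. \<sigma> v (\<rho> u x)) = sR (\<epsilon> e) x"
  shows "tens sR sA (Fm \<sigma> (Fm \<rho> xs)) = tens sR sA xs"
proof (rule tens_eqI)
  fix \<phi> :: "'r \<Rightarrow> 'a \<Rightarrow> complex" assume bf: "bilin_form sR sA \<phi>"
  have l1: "lin sA sR (\<lambda>u. \<rho> u x)" and l2: "lin sR sR (\<rho> u)" for x u using gr by (auto simp: goodrho_def)
  have l3: "lin sA sR (\<lambda>u. \<sigma> u x)" and l4: "lin sR sR (\<sigma> u)" for x u using gs by (auto simp: goodrho_def)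
  have l1': "lin s sA g \<Longrightarrow> lin s sR (\<lambda>y. \<rho> (g y) x)" for s g x using l1[of x] by (simp add: lin_def)
  have l2': "lin s sR g \<Longrightarrow> lin s sR (\<lambda>y. \<rho> u (g y))" for s g u using l2[of u] by (simp add: lin_def)
  have l3': "lin s sA g \<Longrightarrow> lin s sR (\<lambda>y. \<sigma> (g y) x)" for s g x using l3[of x] by (simp add: lin_def)
  have l4': "lin s sR g \<Longrightarrow> lin s sR (\<lambda>y. \<sigma> u (g y))" for s g u using l4[of u] by (simp add: lin_def)
  have "(\<Sum>(x, a)\<leftarrow>Fm \<sigma> (Fm \<rho> xs). \<phi> x a) = (\<Sum>(x, a)\<leftarrow>xs. \<Sum>(u, v)\<leftarrow>\<Delta> a. \<Sum>(p, q)\<leftarrow>\<Delta> v. \<phi> (\<sigma> p (\<rho> u x)) q)"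
    by (simp add: sum_Fm)
  also have "\<dots> = (\<Sum>(x, a)\<leftarrow>xs. \<phi> x a)"
  proof (rule sum_list_cong2, clarify)
    fix x a
    have "(\<Sum>(u, v)\<leftarrow>\<Delta> a. \<Sum>(p, q)\<leftarrow>\<Delta> v. \<phi> (\<sigma> p (\<rho> u x)) q) = (\<Sum>(f, q)\<leftarrow>\<Delta> a. \<Sum>(u, p)\<leftarrow>\<Delta> f. \<phi> (\<sigma> p (\<rho> u x)) q)"
      by (rule D_coassoc_V[OF vs_complex, symmetric],
          (intro bf_lin1[OF bf] bf_lin2[OF bf] l1' l2' l3' l4' lin_id)+)
    also have "\<dots> = (\<Sum>(f, q)\<leftarrow>\<Delta> a. \<phi> (\<Sum>(u, p)\<leftarrow>\<Delta> f. \<sigma> p (\<rho> u x)) q)"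
    proof -
      have "\<phi> (\<Sum>(u, p)\<leftarrow>\<Delta> f. \<sigma> p (\<rho> u x)) q = (\<Sum>(u, p)\<leftarrow>\<Delta> f. \<phi> (\<sigma> p (\<rho> u x)) q)" for f q
        by (rule lin_sum_list2[OF bf_lin1[OF bf lin_id]])
      then show ?thesis by simp
    qed
    also have "\<dots> = (\<Sum>(f, q)\<leftarrow>\<Delta> a. \<phi> x (sA (\<epsilon> f) q))"
      using bf_lin1[OF bf lin_id] bf_lin2[OF bf lin_id] by (simp add: inv lin_def)
    also have "\<dots> = \<phi> x a"
      using lin_sum_list2[OF bf_lin2[OF bf lin_id], of x "\<lambda>f q. sA (\<epsilon> f) q" "\<Delta> a"] counit_l[of a] by simp
    finally show "(\<Sum>(u, v)\<leftarrow>\<Delta> a. \<Sum>(p, q)\<leftarrow>\<Delta> v. \<phi> (\<sigma> p (\<rho> u x)) q) = \<phi> x a" .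
  qed
  finally show "(\<Sum>(x, a)\<leftarrow>Fm \<sigma> (Fm \<rho> xs). \<phi> x a) = (\<Sum>(x, a)\<leftarrow>xs. \<phi> x a)" .
qed


definition SM :: "('a \<Rightarrow> 'r \<Rightarrow> 'r) \<Rightarrow> ('r \<times> 'a) list \<Rightarrow> ('r \<times> 'a) list \<Rightarrow> ('r \<times> 'a) list" where
  "SM act xs ys = [(x * act u x', v * a'). (x, a) \<leftarrow> xs, (x', a') \<leftarrow> ys, (u, v) \<leftarrow> \<Delta> a]"

lemma sum_map_pair': "sum_list (map ((\<lambda>(x, y). \<phi> x y) \<circ> (\<lambda>(u, v). (f u, g v))) zs) = (\<Sum>(u, v)\<leftarrow>zs. \<phi> (f u) (g v) :: 'c::comm_monoid_add)"
  by (induction zs) auto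

lemma sum_SM_inner: "(\<Sum>(y, b)\<leftarrow>concat (map (\<lambda>(x', a'). map (\<lambda>(u, v). (x * act u x', v * a')) (\<Delta> a)) ys). \<phi> y b)
   = (\<Sum>(x', a')\<leftarrow>ys. \<Sum>(u, v)\<leftarrow>\<Delta> a. \<phi> (x * act u x') (v * a') :: 'c::comm_monoid_add)"
proof (induction ys)
  case Nil then show ?case by simp
next
  case (Cons p ys) then show ?case by (cases p) (simp add: sum_map_pair')
qed

lemma sum_SM: "(\<Sum>(y, b)\<leftarrow>SM act xs ys. \<phi> y b) = (\<Sum>(x, a)\<leftarrow>xs. \<Sum>(x', a')\<leftarrow>ys. \<Sum>(u, v)\<leftarrow>\<Delta> a. \<phi> (x * act u x') (v * a') :: 'c::comm_monoid_add)"
proof (induction xs)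
  case Nil then show ?case by (simp add: SM_def)
next
  case (Cons p xs)
  obtain x0 a0 where p: "p = (x0, a0)" by (cases p)
  show ?case using Cons sum_SM_inner[where x=x0 and a=a0 and ys=ys and act=act and \<phi>=\<phi>] by (simp add: SM_def p)
qed

lemma SM_wd:
  assumes ma: "module_algebra sA \<Delta> sR act"
    and e1: "tens sR sA xs = tens sR sA xs'" and e2: "tens sR sA ys = tens sR sA ys'"
  shows "tens sR sA (SM act xs ys) = tens sR sA (SM act xs' ys')"
proof (rule tens_eqI)
  fix \<phi> :: "'r \<Rightarrow> 'a \<Rightarrow> complex" assume bf: "bilin_form sR sA \<phi>"
  have "(\<Sum>(x, a)\<leftarrow>xs. \<Sum>(x', a')\<leftarrow>ys. \<Sum>(u, v)\<leftarrow>\<Delta> a. \<phi> (x * act u x') (v * a'))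
      = (\<Sum>(x, a)\<leftarrow>xs'. \<Sum>(x', a')\<leftarrow>ys. \<Sum>(u, v)\<leftarrow>\<Delta> a. \<phi> (x * act u x') (v * a'))"
    by (rule tens_transfer_RA[OF e1], (intro lin_sum2[OF vs_complex] lin_Dsum[OF vs_complex] bilI
        bf_lin1[OF bf] bf_lin2[OF bf] linR1_rules lin_act_a[OF ma] lin_act_x[OF ma])+)
  also have "\<dots> = (\<Sum>(x', a')\<leftarrow>ys. \<Sum>(x, a)\<leftarrow>xs'. \<Sum>(u, v)\<leftarrow>\<Delta> a. \<phi> (x * act u x') (v * a'))"
    by (rule sum_list_swap2)
  also have "\<dots> = (\<Sum>(x', a')\<leftarrow>ys'. \<Sum>(x, a)\<leftarrow>xs'. \<Sum>(u, v)\<leftarrow>\<Delta> a. \<phi> (x * act u x') (v * a'))"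
    by (rule tens_transfer_RA[OF e2], (intro lin_sum2[OF vs_complex] lin_Dsum[OF vs_complex] bilI
        bf_lin1[OF bf] bf_lin2[OF bf] linR1_rules lin_act_a[OF ma] lin_act_x[OF ma])+)
  also have "\<dots> = (\<Sum>(x, a)\<leftarrow>xs'. \<Sum>(x', a')\<leftarrow>ys'. \<Sum>(u, v)\<leftarrow>\<Delta> a. \<phi> (x * act u x') (v * a'))"
    by (rule sum_list_swap2)
  finally show "(\<Sum>(x, a)\<leftarrow>SM act xs ys. \<phi> x a) = (\<Sum>(x, a)\<leftarrow>SM act xs' ys'. \<phi> x a)"
    by (simp only: sum_SM)
qed

lemma smash_tens: "module_algebra sA \<Delta> sR act \<Longrightarrow>
  smash_mult sR sA \<Delta> act (tens sR sA xs) (tens sR sA ys) = tens sR sA (SM act xs ys)"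
  unfolding smash_mult_def SM_def[symmetric] by (rule SM_wd, assumption, (rule trep_tens)+)

definition gs :: "'a \<Rightarrow> 'r \<Rightarrow> 'r" where "gs u x = snd (\<gamma> u) x"

lemma good_gs: "goodrho gs"
  unfolding goodrho_def gs_def using g_lin_snd mm_lin_snd[OF gm] by blast

lemma good_rho: "goodrho rho"
  unfolding goodrho_def rho_def am_snd
  by (intro conjI allI; (intro linR_all)+)

lemma Hom:
  "Psi gs (smash_mult sR sA \<Delta> act2 (tens sR sA xs) (tens sR sA ys))
   = smash_mult sR sA \<Delta> act1 (Psi gs (tens sR sA xs)) (Psi gs (tens sR sA ys))"
proof -
  have "Psi gs (smash_mult sR sA \<Delta> act2 (tens sR sA xs) (tens sR sA ys)) = tens sR sA (Fm gs (SM act2 xs ys))"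
    by (simp add: smash_tens[OF ma2] Psi_tens[OF good_gs])
  also have "\<dots> = tens sR sA (SM act1 (Fm gs xs) (Fm gs ys))"
  proof (rule tens_eqI)
    fix \<phi> :: "'r \<Rightarrow> 'a \<Rightarrow> complex" assume bf: "bilin_form sR sA \<phi>"
    have core: "(\<Sum>(u, v)\<leftarrow>\<Delta> a. \<Sum>(w, q)\<leftarrow>\<Delta> (v * a'). \<phi> (snd (\<gamma> w) (x * act2 u x')) q)
      = (\<Sum>(u, v)\<leftarrow>\<Delta> a. \<Sum>(p, q)\<leftarrow>\<Delta> a'. \<Sum>(v1, v2)\<leftarrow>\<Delta> v. \<phi> (snd (\<gamma> u) x * act1 v1 (snd (\<gamma> p) x')) (v2 * q))"
      for x a x' a'
    proof -
      have "(\<Sum>(u, v)\<leftarrow>\<Delta> a. \<Sum>(w, q)\<leftarrow>\<Delta> (v * a'). \<phi> (snd (\<gamma> w) (x * act2 u x')) q)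
        = (\<Sum>(u, v)\<leftarrow>\<Delta> a. \<Sum>(v1, v2)\<leftarrow>\<Delta> v. \<Sum>(p, q)\<leftarrow>\<Delta> a'. \<phi> (snd (\<gamma> (v1 * p)) (x * act2 u x')) (v2 * q))"
      proof -
        have "(\<Sum>(w, q)\<leftarrow>\<Delta> (v * a'). \<phi> (snd (\<gamma> w) (x * act2 u x')) q)
          = (\<Sum>(v1, v2)\<leftarrow>\<Delta> v. \<Sum>(p, q)\<leftarrow>\<Delta> a'. \<phi> (snd (\<gamma> (v1 * p)) (x * act2 u x')) (v2 * q))" for u v
          by (rule D_mult_sum[OF vs_complex], rule bilI, (intro bf_lin1[OF bf] bf_lin2[OF bf] linR1_rules)+)
        then show ?thesis by simp
      qed
      also have "\<dots> = (\<Sum>(e, v2)\<leftarrow>\<Delta> a. \<Sum>(u, v1)\<leftarrow>\<Delta> e. \<Sum>(p, q)\<leftarrow>\<Delta> a'. \<phi> (snd (\<gamma> (v1 * p)) (x * act2 u x')) (v2 * q))"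
        by (rule D_coassoc_V[OF vs_complex, symmetric],
            (intro lin_sum2[OF vs_complex] bf_lin1[OF bf] bf_lin2[OF bf] linR1_rules lin_act_a[OF ma2])+)
      also have "\<dots> = (\<Sum>(e, v2)\<leftarrow>\<Delta> a. \<Sum>(p, q)\<leftarrow>\<Delta> a'. \<phi> (\<Sum>(u, v1)\<leftarrow>\<Delta> e. snd (\<gamma> (v1 * p)) (x * act2 u x')) (v2 * q))"
      proof -
        have "\<phi> (\<Sum>(u, v1)\<leftarrow>\<Delta> e. snd (\<gamma> (v1 * p)) (x * act2 u x')) (v2 * q) = (\<Sum>(u, v1)\<leftarrow>\<Delta> e. \<phi> (snd (\<gamma> (v1 * p)) (x * act2 u x')) (v2 * q))" for e v2 p q
          by (rule lin_sum_list2[OF bf_lin1[OF bf lin_id]])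
        then show ?thesis by (simp add: sum_list_swap2[where ys="\<Delta> a'"])
      qed
      also have "\<dots> = (\<Sum>(e, v2)\<leftarrow>\<Delta> a. \<Sum>(p, q)\<leftarrow>\<Delta> a'. \<phi> (\<Sum>(u, v1)\<leftarrow>\<Delta> e. snd (\<gamma> u) x * act1 v1 (snd (\<gamma> p) x')) (v2 * q))"
        by (simp only: Hcore)
      also have "\<dots> = (\<Sum>(e, v2)\<leftarrow>\<Delta> a. \<Sum>(u, v1)\<leftarrow>\<Delta> e. \<Sum>(p, q)\<leftarrow>\<Delta> a'. \<phi> (snd (\<gamma> u) x * act1 v1 (snd (\<gamma> p) x')) (v2 * q))"
      proof -
        have "\<phi> (\<Sum>(u, v1)\<leftarrow>\<Delta> e. snd (\<gamma> u) x * act1 v1 (snd (\<gamma> p) x')) (v2 * q) = (\<Sum>(u, v1)\<leftarrow>\<Delta> e. \<phi> (snd (\<gamma> u) x * act1 v1 (snd (\<gamma> p) x')) (v2 * q))" for e v2 p q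
          by (rule lin_sum_list2[OF bf_lin1[OF bf lin_id]])
        then show ?thesis by (simp add: sum_list_swap2[where ys="\<Delta> a'"])
      qed
      also have "\<dots> = (\<Sum>(u, v)\<leftarrow>\<Delta> a. \<Sum>(v1, v2)\<leftarrow>\<Delta> v. \<Sum>(p, q)\<leftarrow>\<Delta> a'. \<phi> (snd (\<gamma> u) x * act1 v1 (snd (\<gamma> p) x')) (v2 * q))"
        by (rule D_coassoc_V[OF vs_complex],
            (intro lin_sum2[OF vs_complex] bf_lin1[OF bf] bf_lin2[OF bf] linR1_rules)+)
      also have "\<dots> = (\<Sum>(u, v)\<leftarrow>\<Delta> a. \<Sum>(p, q)\<leftarrow>\<Delta> a'. \<Sum>(v1, v2)\<leftarrow>\<Delta> v. \<phi> (snd (\<gamma> u) x * act1 v1 (snd (\<gamma> p) x')) (v2 * q))"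
        by (simp add: sum_list_swap2[where ys="\<Delta> a'"])
      finally show ?thesis .
    qed
    have "(\<Sum>(y, b)\<leftarrow>Fm gs (SM act2 xs ys). \<phi> y b)
       = (\<Sum>(x, a)\<leftarrow>xs. \<Sum>(x', a')\<leftarrow>ys. \<Sum>(u, v)\<leftarrow>\<Delta> a. \<Sum>(w, q)\<leftarrow>\<Delta> (v * a'). \<phi> (snd (\<gamma> w) (x * act2 u x')) q)"
      by (simp only: sum_Fm sum_SM gs_def)
    also have "\<dots> = (\<Sum>(x, a)\<leftarrow>xs. \<Sum>(x', a')\<leftarrow>ys. \<Sum>(u, v)\<leftarrow>\<Delta> a. \<Sum>(p, q)\<leftarrow>\<Delta> a'. \<Sum>(v1, v2)\<leftarrow>\<Delta> v. \<phi> (snd (\<gamma> u) x * act1 v1 (snd (\<gamma> p) x')) (v2 * q))"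
      by (simp only: core)
    also have "\<dots> = (\<Sum>(x, a)\<leftarrow>xs. \<Sum>(u, v)\<leftarrow>\<Delta> a. \<Sum>(x', a')\<leftarrow>ys. \<Sum>(p, q)\<leftarrow>\<Delta> a'. \<Sum>(v1, v2)\<leftarrow>\<Delta> v. \<phi> (snd (\<gamma> u) x * act1 v1 (snd (\<gamma> p) x')) (v2 * q))"
      by (simp add: sum_list_swap2[where xs=ys])
    also have "\<dots> = (\<Sum>(y, b)\<leftarrow>SM act1 (Fm gs xs) (Fm gs ys). \<phi> y b)"
      by (simp only: sum_Fm sum_SM gs_def)
    finally show "(\<Sum>(y, b)\<leftarrow>Fm gs (SM act2 xs ys). \<phi> y b) = (\<Sum>(y, b)\<leftarrow>SM act1 (Fm gs xs) (Fm gs ys). \<phi> y b)" .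
  qed
  also have "\<dots> = smash_mult sR sA \<Delta> act1 (Psi gs (tens sR sA xs)) (Psi gs (tens sR sA ys))"
    by (simp add: smash_tens[OF ma1] Psi_tens[OF good_gs])
  finally show ?thesis .
qed


lemma Psi_Psi: "goodrho \<rho> \<Longrightarrow> goodrho \<sigma> \<Longrightarrow> Psi \<sigma> (Psi \<rho> (tens sR sA xs)) = tens sR sA (Fm \<sigma> (Fm \<rho> xs))"
  by (simp add: Psi_tens)

lemma iso: "smash_isomorphic sR sA \<Delta> act1 act2"
proof -
  let ?TS = "tensor_space sR sA"
  define \<Phi> where "\<Phi> = Psi rho"
  define \<Psi> where "\<Psi> = Psi gs"
  have inTS: "tens sR sA xs \<in> ?TS" for xs by (simp add: tensor_space_def)
  have TS_E: "t \<in> ?TS \<Longrightarrow> \<exists>xs. t = tens sR sA xs" for t by (auto simp: tensor_space_def)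
  have PhiT: "\<Phi> (tens sR sA xs) = tens sR sA (Fm rho xs)" for xs
    by (simp add: \<Phi>_def Psi_tens[OF good_rho])
  have PsiT: "\<Psi> (tens sR sA xs) = tens sR sA (Fm gs xs)" for xs
    by (simp add: \<Psi>_def Psi_tens[OF good_gs])
  have PsiPhi: "\<Psi> (\<Phi> t) = t" if tTS: "t \<in> ?TS" for t
  proof -
    obtain xs where t: "t = tens sR sA xs" using TS_E[OF tTS] by blast
    show ?thesis unfolding t PhiT PsiT
      by (rule Fm_comp[OF good_rho good_gs]) (simp add: gs_def LI)
  qed
  have PhiPsi: "\<Phi> (\<Psi> t) = t" if tTS: "t \<in> ?TS" for t
  proof -
    obtain xs where t: "t = tens sR sA xs" using TS_E[OF tTS] by blast
    show ?thesis unfolding t PhiT PsiT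
      by (rule Fm_comp[OF good_gs good_rho]) (simp add: gs_def RI)
  qed
  have PhiTS: "\<Phi> t \<in> ?TS" if "t \<in> ?TS" for t
    using TS_E[OF that] PhiT inTS by auto
  have PsiTS: "\<Psi> t \<in> ?TS" if "t \<in> ?TS" for t
    using TS_E[OF that] PsiT inTS by auto
  have bij: "bij_betw \<Phi> ?TS ?TS"
    by (rule bij_betw_byWitness[where f'=\<Psi>]) (auto simp: PsiPhi PhiPsi PhiTS PsiTS)
  have add: "\<Phi> (tadd t t') = tadd (\<Phi> t) (\<Phi> t')" if tTS: "t \<in> ?TS" "t' \<in> ?TS" for t t'
  proof -
    obtain xs ys where t: "t = tens sR sA xs" and t': "t' = tens sR sA ys" using TS_E[OF tTS(1)] TS_E[OF tTS(2)] by blast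
    show ?thesis unfolding t t' by (simp add: tadd_tens PhiT Fm_append)
  qed
  have mul: "\<Phi> (smash_mult sR sA \<Delta> act1 t t') = smash_mult sR sA \<Delta> act2 (\<Phi> t) (\<Phi> t')" if tTS: "t \<in> ?TS" "t' \<in> ?TS" for t t'
  proof -
    obtain xs ys where t: "t = tens sR sA xs" and t': "t' = tens sR sA ys" using TS_E[OF tTS(1)] TS_E[OF tTS(2)] by blast
    have "\<Psi> (smash_mult sR sA \<Delta> act2 (\<Phi> t) (\<Phi> t')) = smash_mult sR sA \<Delta> act1 (\<Psi> (\<Phi> t)) (\<Psi> (\<Phi> t'))"
      unfolding t t' PhiT \<Psi>_def by (rule Hom)
    also have "\<dots> = smash_mult sR sA \<Delta> act1 t t'" using tTS by (simp add: PsiPhi)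
    finally have e: "\<Psi> (smash_mult sR sA \<Delta> act2 (\<Phi> t) (\<Phi> t')) = smash_mult sR sA \<Delta> act1 t t'" .
    have "smash_mult sR sA \<Delta> act2 (\<Phi> t) (\<Phi> t') \<in> ?TS"
      by (simp add: smash_mult_def inTS)
    then have "\<Phi> (\<Psi> (smash_mult sR sA \<Delta> act2 (\<Phi> t) (\<Phi> t'))) = smash_mult sR sA \<Delta> act2 (\<Phi> t) (\<Phi> t')"
      by (rule PhiPsi)
    then show ?thesis using e by simp
  qed
  have scl: "\<Phi> (tscale c t) = tscale c (\<Phi> t)" if tTS: "t \<in> ?TS" for c t
  proof -
    obtain xs where t: "t = tens sR sA xs" using TS_E[OF tTS] by blast
    show ?thesis unfolding t by (simp add: tscale_tens PhiT Fm_scale[OF good_rho])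
  qed
  show ?thesis unfolding smash_isomorphic_def
    using bij add mul scl by blast
qed

end

theorem proposition5p13:
  fixes sA :: "complex \<Rightarrow> 'a::ring_1 \<Rightarrow> 'a"
    and \<Delta> :: "'a \<Rightarrow> ('a \<times> 'a) list"
    and \<epsilon> :: "'a \<Rightarrow> complex"
    and S :: "'a \<Rightarrow> 'a"
    and sR :: "complex \<Rightarrow> 'r::ring \<Rightarrow> 'r"
    and act1 act2 :: "'a \<Rightarrow> 'r \<Rightarrow> 'r"
    and \<gamma> :: "'a \<Rightarrow> 'r mult"
  assumes "hopf_algebra sA \<Delta> \<epsilon> S"
    and "bij S"
    and "cplx_algebra sR"
    and "nondegenerate TYPE('r)"
    and "module_algebra sA \<Delta> sR act1"
    and "module_algebra sA \<Delta> sR act2"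
    and "cocycle_equivalent sA \<Delta> S sR act1 act2 \<gamma>"
  shows "smash_isomorphic sR sA \<Delta> act1 act2"
proof -
  interpret ctx sA \<Delta> \<epsilon> S sR act1 act2 \<gamma>
    by (unfold_locales; fact)
  show ?thesis by (rule iso)
qed

end
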